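(* For every integer $n\ge2$, $\mathsf L_{\mathrm{Mon}(R)}(I_{C_n})=[2,n+1]$.
   Context: Let $K$ be a field, $N\ge2$, $R=K[X_1,\dots,X_N]$, $X=X_1$, $Y=X_2$. $\mathrm{Mon}(R)$ is the monoid of nonzero monomial ideals of $R$ under ideal multiplication, with identity $R$ (its only unit); an atom of $\mathrm{Mon}(R)$ is an $I\ne R$ in $\mathrm{Mon}(R)$ not a product of two elements of $\mathrm{Mon}(R)\setminus\{R\}$; $\mathsf L_{\mathrm{Mon}(R)}(I)$ is the set of $k$ such that $I$ is a product of $k$ atoms of $\mathrm{Mon}(R)$. $[x,y]=\{z\in\mathbb Z:x\le z\le y\}$. Fix an integer $n\ge 2$ and positive integers $a_1,\dots,a_{n+1}$ with (C1) $a_{n+1}=a_1+\dots+a_{n-1}+2a_n$ and (C2) $a_{i+1}>2(a_1+\dots+a_i)$ for all $i\in[1,n-1]$. For $I\subseteq[1,n+1]$ put $a_I=\sum_{i\in I}a_i$ ($a_\emptyset=0$). $C_n=\{a_I:I\subseteq[1,n+1]\}$, $\mu=a_{[1,n+1]}$, and $I_{C_n}=\langle X^{\mu-c}Y^c:c\in C_n\rangle$. *)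

theory Defs
  imports "HOL-Library.Poly_Mapping"
begin

text \<open>Polynomials over a field 'k in variables X_1,...,X_N are represented as finitely
supported maps from exponent vectors (nat =>0 nat, variable X_(i+1) has index i) to
coefficients, restricted to exponent vectors supported in {..<N}.\<close>

type_synonym 'k mpoly = "(nat \<Rightarrow>\<^sub>0 nat) \<Rightarrow>\<^sub>0 'k"

definition polyring :: "nat \<Rightarrow> ('k::field) mpoly set" where
  "polyring N = {p::'k mpoly. \<forall>m\<in>Poly_Mapping.keys p. Poly_Mapping.keys m \<subseteq> {..<N}}"

definition is_ideal :: "nat \<Rightarrow> ('k::field) mpoly set \<Rightarrow> bool" where
  "is_ideal N I \<longleftrightarrow> I \<subseteq> polyring N \<and> 0 \<in> I \<and> (\<forall>x\<in>I. \<forall>y\<in>I. x + y \<in> I)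
     \<and> (\<forall>r\<in>polyring N. \<forall>x\<in>I. r * x \<in> I)"

definition gen_ideal :: "nat \<Rightarrow> ('k::field) mpoly set \<Rightarrow> 'k mpoly set" where
  "gen_ideal N S = \<Inter>{I. is_ideal N I \<and> S \<subseteq> I}"

definition mono :: "(nat \<Rightarrow>\<^sub>0 nat) \<Rightarrow> ('k::field) mpoly" where
  "mono m = Poly_Mapping.single m 1"

definition monomial_ideal :: "nat \<Rightarrow> ('k::field) mpoly set \<Rightarrow> bool" where
  "monomial_ideal N I \<longleftrightarrow> (\<exists>M. (\<forall>m\<in>M. Poly_Mapping.keys m \<subseteq> {..<N}) \<and> I = gen_ideal N (mono ` M))"

definition ideal_mult :: "nat \<Rightarrow> ('k::field) mpoly set \<Rightarrow> 'k mpoly set \<Rightarrow> 'k mpoly set" where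
  "ideal_mult N I J = gen_ideal N {x * y | x y. x \<in> I \<and> y \<in> J}"

definition Mon :: "nat \<Rightarrow> ('k::field) mpoly set set" where
  "Mon N = {I. monomial_ideal N I \<and> I \<noteq> {0}}"

definition Mon_atom :: "nat \<Rightarrow> ('k::field) mpoly set \<Rightarrow> bool" where
  "Mon_atom N I \<longleftrightarrow> I \<in> Mon N \<and> I \<noteq> polyring N \<and>
     \<not> (\<exists>A B. A \<in> Mon N - {polyring N} \<and> B \<in> Mon N - {polyring N} \<and> I = ideal_mult N A B)"

definition Mon_lengths :: "nat \<Rightarrow> ('k::field) mpoly set \<Rightarrow> nat set" where
  "Mon_lengths N I = {k. \<exists>as. length as = k \<and> (\<forall>A\<in>set as. Mon_atom N A) \<and>
      I = foldr (ideal_mult N) as (polyring N)}"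

text \<open>X^i Y^j with X = X_1 (index 0), Y = X_2 (index 1).\<close>
definition monoXY :: "nat \<Rightarrow> nat \<Rightarrow> ('k::field) mpoly" where
  "monoXY i j = mono (Poly_Mapping.single 0 i + Poly_Mapping.single 1 j)"

definition Cset :: "(nat \<Rightarrow> nat) \<Rightarrow> nat \<Rightarrow> nat set" where
  "Cset a n = (\<lambda>I. sum a I) ` Pow {1..n+1}"

definition ICn :: "nat \<Rightarrow> (nat \<Rightarrow> nat) \<Rightarrow> nat \<Rightarrow> ('k::field) mpoly set" where
  "ICn N a n = gen_ideal N ((\<lambda>c. monoXY (sum a {1..n+1} - c) c) ` Cset a n)"

end

theory Submission
  imports Defs
begin


abbreviation lk where "lk \<equiv> Poly_Mapping.lookup"
abbreviation ks where "ks \<equiv> Poly_Mapping.keys"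
abbreviation sg where "sg \<equiv> Poly_Mapping.single"

type_synonym vec = "nat \<Rightarrow>\<^sub>0 nat"

definition lem :: "vec \<Rightarrow> vec \<Rightarrow> bool" where "lem u v \<longleftrightarrow> (\<forall>k. lk u k \<le> lk v k)"
definition up :: "nat \<Rightarrow> vec set \<Rightarrow> vec set" where
  "up N M = {m. ks m \<subseteq> {..<N} \<and> (\<exists>g\<in>M. lem g m)}"
definition okv :: "nat \<Rightarrow> vec set \<Rightarrow> bool" where "okv N M \<longleftrightarrow> (\<forall>g\<in>M. ks g \<subseteq> {..<N})"
definition msum :: "vec set \<Rightarrow> vec set \<Rightarrow> vec set" where
  "msum A B = {x + y | x y. x \<in> A \<and> y \<in> B}"

lemma keys_add_nat: "ks ((u::vec) + v) = ks u \<union> ks v"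
  by (auto simp: in_keys_iff lookup_add)

lemma lem_refl: "lem u u" by (simp add: lem_def)
lemma lem_trans: "lem u v \<Longrightarrow> lem v w \<Longrightarrow> lem u w"
  unfolding lem_def by (metis le_trans)
lemma lem_add_right: "lem u v \<Longrightarrow> lem u (v + w)"
  unfolding lem_def lookup_add by (simp add: trans_le_add1)
lemma lem_add_left: "lem u v \<Longrightarrow> lem u (w + v)"
  unfolding lem_def lookup_add by (simp add: trans_le_add2)
lemma lem_add_mono: "lem u v \<Longrightarrow> lem u' v' \<Longrightarrow> lem (u + u') (v + v')"
  unfolding lem_def lookup_add by (simp add: add_mono)
lemma lem_addD: "lem (u + u') v \<Longrightarrow> lem u v"
  unfolding lem_def lookup_add using add_leD1 by blast
lemma lem_zero: "lem g 0 \<Longrightarrow> g = 0"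
  unfolding lem_def by (intro poly_mapping_eqI) auto
lemma lem_0: "lem 0 g" unfolding lem_def by simp

lemma polyring_add: "p \<in> polyring N \<Longrightarrow> q \<in> polyring N \<Longrightarrow> p + q \<in> polyring N"
  unfolding polyring_def mem_Collect_eq
proof (intro ballI)
  fix m assume p: "\<forall>m\<in>ks p. ks m \<subseteq> {..<N}" and q: "\<forall>m\<in>ks q. ks m \<subseteq> {..<N}" and m: "m \<in> ks (p + q)"
  have "m \<in> ks p \<union> ks q" using m keys_add[of p q] by blast
  then show "ks m \<subseteq> {..<N}" using p q by auto
qed

lemma polyring_mult: "(p::'k::field mpoly) \<in> polyring N \<Longrightarrow> q \<in> polyring N \<Longrightarrow> p * q \<in> polyring N"
  unfolding polyring_def mem_Collect_eq
proof (intro ballI)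
  fix m assume p: "\<forall>m\<in>ks p. ks m \<subseteq> {..<N}" and q: "\<forall>m\<in>ks q. ks m \<subseteq> {..<N}" and m: "m \<in> ks (p * q)"
  have "m \<in> {a + b | a b. a \<in> ks p \<and> b \<in> ks q}" using m keys_mult[of p q] by blast
  then obtain x y where xy: "m = x + y" "x \<in> ks p" "y \<in> ks q" by blast
  have "ks m = ks x \<union> ks y" using xy(1) keys_add_nat by simp
  then show "ks m \<subseteq> {..<N}" using p q xy by auto
qed

lemma zero_polyring: "0 \<in> polyring N" by (simp add: polyring_def)

lemma is_ideal_polyring: "is_ideal N ((polyring N)::'k::field mpoly set)"
  unfolding is_ideal_def by (auto simp: zero_polyring polyring_add polyring_mult)

lemma gen_ideal_is_ideal:
  assumes "S \<subseteq> polyring N" shows "is_ideal N (gen_ideal N (S::'k::field mpoly set))"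
proof -
  let ?F = "{I. is_ideal N I \<and> S \<subseteq> I}"
  have inF: "polyring N \<in> ?F" using assms is_ideal_polyring by auto
  have 1: "\<Inter>?F \<subseteq> polyring N" using inF by blast
  have 2: "0 \<in> \<Inter>?F" by (auto simp: is_ideal_def)
  have 3: "\<forall>x\<in>\<Inter>?F. \<forall>y\<in>\<Inter>?F. x + y \<in> \<Inter>?F" by (auto simp: is_ideal_def)
  have 4: "\<forall>r\<in>polyring N. \<forall>x\<in>\<Inter>?F. r * x \<in> \<Inter>?F" by (auto simp: is_ideal_def)
  show ?thesis unfolding gen_ideal_def is_ideal_def[of N "\<Inter>?F"] using 1 2 3 4 by blast
qed

lemma ideal_multI: "is_ideal N I \<Longrightarrow> r \<in> polyring N \<Longrightarrow> x \<in> I \<Longrightarrow> r * x \<in> I"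
  unfolding is_ideal_def by blast

lemma gen_ideal_least: "is_ideal N I \<Longrightarrow> S \<subseteq> I \<Longrightarrow> gen_ideal N S \<subseteq> I"
  unfolding gen_ideal_def by blast

lemma gen_ideal_base: "S \<subseteq> gen_ideal N S"
  unfolding gen_ideal_def by blast

lemma gen_ideal_baseI: "x \<in> S \<Longrightarrow> x \<in> gen_ideal N S"
  unfolding gen_ideal_def by blast

lemma ideal_sum:
  assumes "is_ideal N I" "\<forall>x\<in>A. f x \<in> I" shows "sum f A \<in> I"
  using assms(2)
proof (induction A rule: infinite_finite_induct)
  case (infinite A) then show ?case using assms(1) by (simp add: is_ideal_def)
next
  case empty then show ?case using assms(1) by (simp add: is_ideal_def)
next
  case (insert x F) then show ?case using assms(1) by (simp add: is_ideal_def)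
qed

lemma poly_expand: "(p::'k::field mpoly) = (\<Sum>m\<in>ks p. sg m (lk p m))"
proof (rule poly_mapping_eqI)
  fix k
  have "lk (\<Sum>m\<in>ks p. sg m (lk p m)) k = (\<Sum>m\<in>ks p. if m = k then lk p m else 0)"
    by (simp add: lookup_sum lookup_single when_def eq_commute)
  also have "\<dots> = lk p k" by (simp add: in_keys_iff)
  finally show "lk p k = lk (\<Sum>m\<in>ks p. sg m (lk p m)) k" by simp
qed

lemma Z_ideal:
  assumes "okv N M" shows "is_ideal N {p::'k::field mpoly. ks p \<subseteq> up N M}"
proof -
  let ?Z = "{p::'k mpoly. ks p \<subseteq> up N M}"
  have 1: "?Z \<subseteq> polyring N" by (auto simp: polyring_def up_def)
  have 2: "0 \<in> ?Z" by simp
  have 3: "\<forall>x\<in>?Z. \<forall>y\<in>?Z. x + y \<in> ?Z"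
  proof (intro ballI)
    fix x y :: "'k mpoly" assume x: "x \<in> ?Z" and y: "y \<in> ?Z"
    have "ks (x + y) \<subseteq> ks x \<union> ks y" by (rule keys_add)
    then show "x + y \<in> ?Z" using x y by auto
  qed
  have 4: "\<forall>r\<in>polyring N. \<forall>x\<in>?Z. r * x \<in> ?Z"
  proof (intro ballI)
    fix r x :: "'k mpoly" assume r: "r \<in> polyring N" and x: "x \<in> ?Z"
    have "ks (r * x) \<subseteq> up N M"
    proof
      fix m assume "m \<in> ks (r * x)"
      then have "m \<in> {a + b | a b. a \<in> ks r \<and> b \<in> ks x}" using keys_mult[of r x] by blast
      then obtain a b where ab: "m = a + b" "a \<in> ks r" "b \<in> ks x" by blast
      then have "b \<in> up N M" using x by auto
      then obtain g where g: "g \<in> M" "lem g b" and kb: "ks b \<subseteq> {..<N}" unfolding up_def by blast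
      have ka: "ks a \<subseteq> {..<N}" using r ab(2) unfolding polyring_def by blast
      have "ks m \<subseteq> {..<N}" using ka kb ab(1) keys_add_nat by simp
      moreover have "lem g m" using g(2) ab(1) lem_add_left by simp
      ultimately show "m \<in> up N M" unfolding up_def using g(1) by blast
    qed
    then show "r * x \<in> ?Z" by simp
  qed
  show ?thesis unfolding is_ideal_def[of N ?Z] using 1 2 3 4 by blast
qed

lemma mono_keys: "ks (mono m :: 'k::field mpoly) = {m}"
  by (simp add: mono_def)

lemma gen_char:
  assumes ok: "okv N M" shows "gen_ideal N (mono ` M :: 'k::field mpoly set) = {p. ks p \<subseteq> up N M}"
proof
  show "gen_ideal N (mono ` M :: 'k::field mpoly set) \<subseteq> {p. ks p \<subseteq> up N M}"
  proof (rule gen_ideal_least[OF Z_ideal[OF ok]])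
    show "(mono ` M :: 'k::field mpoly set) \<subseteq> {p. ks p \<subseteq> up N M}"
      using ok by (force simp: mono_keys up_def okv_def lem_refl)
  qed
next
  have sub: "(mono ` M :: 'k::field mpoly set) \<subseteq> polyring N"
    using ok by (auto simp: polyring_def mono_keys okv_def)
  note ideal = gen_ideal_is_ideal[OF sub]
  show "{p. ks p \<subseteq> up N M} \<subseteq> gen_ideal N (mono ` M :: 'k::field mpoly set)"
  proof
    fix p :: "'k mpoly" assume p: "p \<in> {p. ks p \<subseteq> up N M}"
    have "(\<Sum>m\<in>ks p. sg m (lk p m)) \<in> gen_ideal N (mono ` M)"
    proof (rule ideal_sum[OF ideal], rule ballI)
      fix m assume m: "m \<in> ks p"
      then have "m \<in> up N M" using p by auto
      then obtain g where g: "g \<in> M" "lem g m" and km: "ks m \<subseteq> {..<N}" by (auto simp: up_def)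
      have eq: "m - g + g = m" using g(2)
        by (intro poly_mapping_eqI) (simp add: lookup_add lookup_minus lem_def)
      have "sg m (lk p m) = sg (m - g) (lk p m) * mono g"
        by (simp add: mono_def mult_single eq)
      moreover have "sg (m - g) (lk p m) \<in> polyring N"
      proof -
        have "ks (m - g) \<subseteq> ks m" by (auto simp: in_keys_iff lookup_minus)
        then show ?thesis using km by (auto simp: polyring_def)
      qed
      moreover have "mono g \<in> gen_ideal N (mono ` M)" using g by (auto intro: gen_ideal_baseI)
      ultimately show "sg m (lk p m) \<in> gen_ideal N (mono ` M)"
        using ideal_multI[OF ideal] by simp
    qed
    then show "p \<in> gen_ideal N (mono ` M)" using poly_expand[of p] by simp
  qed
qed

lemma mono_in_gen:
  assumes "okv N M" shows "(mono m :: 'k::field mpoly) \<in> gen_ideal N (mono ` M) \<longleftrightarrow> m \<in> up N M"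
  using gen_char[OF assms, where 'k='k] by (simp add: mono_keys)

lemma gen_eq_iff:
  assumes "okv N M" "okv N M'"
  shows "(gen_ideal N (mono ` M) :: 'k::field mpoly set) = gen_ideal N (mono ` M') \<longleftrightarrow> up N M = up N M'"
proof
  assume "(gen_ideal N (mono ` M) :: 'k::field mpoly set) = gen_ideal N (mono ` M')"
  then have "\<forall>m. ((mono m :: 'k mpoly) \<in> gen_ideal N (mono ` M)) = ((mono m :: 'k mpoly) \<in> gen_ideal N (mono ` M'))" by simp
  then show "up N M = up N M'" using mono_in_gen[OF assms(1), where 'k='k] mono_in_gen[OF assms(2), where 'k='k] by blast
next
  assume "up N M = up N M'" then show "(gen_ideal N (mono ` M) :: 'k::field mpoly set) = gen_ideal N (mono ` M')"
    using gen_char[OF assms(1), where 'k='k] gen_char[OF assms(2), where 'k='k] by simp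
qed

lemma okv_msum: "okv N A \<Longrightarrow> okv N B \<Longrightarrow> okv N (msum A B)"
  unfolding okv_def msum_def by (force simp: keys_add_nat)

lemma up_msum:
  assumes "u \<in> up N A" "v \<in> up N B" shows "u + v \<in> up N (msum A B)"
proof -
  obtain g where g: "g \<in> A" "lem g u" and ku: "ks u \<subseteq> {..<N}" using assms(1) unfolding up_def by blast
  obtain h where h: "h \<in> B" "lem h v" and kv: "ks v \<subseteq> {..<N}" using assms(2) unfolding up_def by blast
  have "g + h \<in> msum A B" unfolding msum_def using g h by blast
  moreover have "lem (g + h) (u + v)" using g h by (simp add: lem_add_mono)
  moreover have "ks (u + v) \<subseteq> {..<N}" using ku kv keys_add_nat by simp
  ultimately show ?thesis unfolding up_def by blast
qed

lemma up_base: "okv N M \<Longrightarrow> g \<in> M \<Longrightarrow> g \<in> up N M"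
  unfolding up_def okv_def using lem_refl by blast

lemma ideal_mult_gen:
  assumes okA: "okv N A" and okB: "okv N B"
  shows "ideal_mult N (gen_ideal N (mono ` A)) (gen_ideal N (mono ` B)) = (gen_ideal N (mono ` msum A B) :: 'k::field mpoly set)"
proof -
  let ?GA = "gen_ideal N (mono ` A) :: 'k mpoly set"
  let ?GB = "gen_ideal N (mono ` B) :: 'k mpoly set"
  let ?S = "{x * y |x y. x \<in> ?GA \<and> y \<in> ?GB}"
  have okAB: "okv N (msum A B)" using okA okB by (rule okv_msum)
  have cA: "?GA = {p. ks p \<subseteq> up N A}" by (rule gen_char[OF okA])
  have cB: "?GB = {p. ks p \<subseteq> up N B}" by (rule gen_char[OF okB])
  have cAB: "(gen_ideal N (mono ` msum A B) :: 'k mpoly set) = {p. ks p \<subseteq> up N (msum A B)}"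
    by (rule gen_char[OF okAB])
  have S_sub: "?S \<subseteq> {p. ks p \<subseteq> up N (msum A B)}"
  proof
    fix z assume "z \<in> ?S"
    then obtain x y where z: "z = x * y" and x: "x \<in> ?GA" and y: "y \<in> ?GB" by blast
    have "ks (x * y) \<subseteq> up N (msum A B)"
    proof
      fix m assume "m \<in> ks (x * y)"
      then have "m \<in> {a + b | a b. a \<in> ks x \<and> b \<in> ks y}" using keys_mult[of x y] by blast
      then obtain a b where ab: "m = a + b" "a \<in> ks x" "b \<in> ks y" by blast
      have "a \<in> up N A" using x ab(2) cA by blast
      moreover have "b \<in> up N B" using y ab(3) cB by blast
      ultimately show "m \<in> up N (msum A B)" using up_msum ab(1) by blast
    qed
    then show "z \<in> {p. ks p \<subseteq> up N (msum A B)}" using z by simp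
  qed
  have le1: "ideal_mult N ?GA ?GB \<subseteq> {p. ks p \<subseteq> up N (msum A B)}"
    unfolding ideal_mult_def by (rule gen_ideal_least[OF Z_ideal[OF okAB] S_sub])
  have subA: "?GA \<subseteq> polyring N" using cA by (auto simp: polyring_def up_def)
  have subB: "?GB \<subseteq> polyring N" using cB by (auto simp: polyring_def up_def)
  have sub: "?S \<subseteq> polyring N"
  proof
    fix z assume "z \<in> ?S"
    then obtain x y where z: "z = x * y" and x: "x \<in> ?GA" and y: "y \<in> ?GB" by blast
    have "x \<in> polyring N" using x subA by blast
    moreover have "y \<in> polyring N" using y subB by blast
    ultimately show "z \<in> polyring N" using z polyring_mult by simp
  qed
  have hmon: "(mono ` msum A B :: 'k mpoly set) \<subseteq> gen_ideal N ?S"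
  proof
    fix z assume "z \<in> (mono ` msum A B :: 'k mpoly set)"
    then obtain a b where ab: "a \<in> A" "b \<in> B" "z = mono (a + b)" by (auto simp: msum_def)
    have "z = mono a * mono b" using ab by (simp add: mono_def mult_single)
    moreover have "mono a \<in> ?GA" using ab(1) by (auto intro: gen_ideal_baseI)
    moreover have "mono b \<in> ?GB" using ab(2) by (auto intro: gen_ideal_baseI)
    ultimately have "z \<in> ?S" by blast
    then show "z \<in> gen_ideal N ?S" by (rule gen_ideal_baseI)
  qed
  have le2: "(gen_ideal N (mono ` msum A B) :: 'k mpoly set) \<subseteq> ideal_mult N ?GA ?GB"
    unfolding ideal_mult_def by (rule gen_ideal_least[OF gen_ideal_is_ideal[OF sub] hmon])
  show ?thesis using le1 le2 cAB by blast
qed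

lemma polyring_gen: "polyring N = (gen_ideal N (mono ` {0}) :: 'k::field mpoly set)"
proof -
  have ok: "okv N {0}" by (simp add: okv_def)
  show ?thesis unfolding gen_char[OF ok] by (auto simp: polyring_def up_def lem_0)
qed

lemma okv_0: "okv N {0}" by (simp add: okv_def)

lemma up_eq_R_iff: "okv N M \<Longrightarrow> up N M = up N {0} \<longleftrightarrow> 0 \<in> M"
proof
  assume "okv N M" "up N M = up N {0}"
  then have "0 \<in> up N M" by (auto simp: up_def lem_0)
  then show "0 \<in> M" by (auto simp: up_def dest: lem_zero)
next
  assume "0 \<in> M" then show "up N M = up N {0}" unfolding up_def using lem_0 by blast
qed

lemma gen_eq_R_iff:
  assumes "okv N M" shows "(gen_ideal N (mono ` M) :: 'k::field mpoly set) = polyring N \<longleftrightarrow> 0 \<in> M"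
  using gen_eq_iff[OF assms okv_0, where 'k='k] polyring_gen[where 'k='k] up_eq_R_iff[OF assms] by simp

lemma gen_empty: "(gen_ideal N (mono ` {}) :: 'k::field mpoly set) = {0}"
proof -
  have "okv N {}" by (simp add: okv_def)
  from gen_char[OF this, where 'k='k] show ?thesis by (auto simp: up_def)
qed

lemma Mon_rep:
  assumes "(I :: 'k::field mpoly set) \<in> Mon N"
  shows "\<exists>M. okv N M \<and> M \<noteq> {} \<and> I = gen_ideal N (mono ` M)"
proof -
  from assms obtain M where M: "\<forall>m\<in>M. ks m \<subseteq> {..<N}" "I = gen_ideal N (mono ` M)" "I \<noteq> {0}"
    by (auto simp: Mon_def monomial_ideal_def)
  then have "M \<noteq> {}" using gen_empty[where 'k='k and N=N] by auto
  then show ?thesis using M by (auto simp: okv_def)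
qed

lemma gen_in_Mon:
  assumes "okv N M" "M \<noteq> {}" shows "(gen_ideal N (mono ` M) :: 'k::field mpoly set) \<in> Mon N"
proof -
  obtain g where g: "g \<in> M" using assms by auto
  have "(mono g :: 'k mpoly) \<in> gen_ideal N (mono ` M)" using g by (auto intro: gen_ideal_baseI)
  moreover have "(mono g :: 'k mpoly) \<noteq> 0" using mono_keys[of g, where 'k='k] by auto
  ultimately have "(gen_ideal N (mono ` M) :: 'k::field mpoly set) \<noteq> {0}" by auto
  then show ?thesis using assms unfolding Mon_def monomial_ideal_def okv_def by blast
qed

lemma msum_0: "msum M {0} = M" by (auto simp: msum_def)
lemma msum_comm: "msum A B = msum B A"
  unfolding msum_def by (auto; metis add.commute)

lemma foldr_rep:
  assumes "\<forall>A\<in>set As. (A :: 'k::field mpoly set) \<in> Mon N"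
  shows "\<exists>M. okv N M \<and> M \<noteq> {} \<and> foldr (ideal_mult N) As (polyring N) = gen_ideal N (mono ` M)"
  using assms
proof (induction As)
  case Nil then show ?case using polyring_gen[where 'k='k and N=N] okv_0[of N] by auto
next
  case (Cons A As)
  have "\<forall>A\<in>set As. A \<in> Mon N" using Cons.prems by simp
  then obtain MB where B: "okv N MB" "MB \<noteq> {}" "foldr (ideal_mult N) As (polyring N) = gen_ideal N (mono ` MB)"
    using Cons.IH by blast
  have "A \<in> Mon N" using Cons.prems by simp
  then obtain MA where A: "okv N MA" "MA \<noteq> {}" "A = gen_ideal N (mono ` MA)" using Mon_rep by blast
  have "foldr (ideal_mult N) (A # As) (polyring N) = ideal_mult N A (foldr (ideal_mult N) As (polyring N))"
    by simp
  also have "\<dots> = gen_ideal N (mono ` msum MA MB)" using A(3) B(3) ideal_mult_gen[OF A(1) B(1)] by simp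
  finally have eq: "foldr (ideal_mult N) (A # As) (polyring N) = gen_ideal N (mono ` msum MA MB)" .
  have "msum MA MB \<noteq> {}" using A(2) B(2) unfolding msum_def by blast
  then show ?case using okv_msum[OF A(1) B(1)] eq by blast
qed


definition tdeg :: "vec \<Rightarrow> nat" where "tdeg v = sum (lk v) (ks v)"

lemma tdeg_add: "tdeg (u + v) = tdeg u + tdeg v"
  unfolding tdeg_def using setsum_keys_plus_distrib[of "\<lambda>k x. x" u v] by simp

lemma tdeg_zero_iff: "tdeg v = 0 \<longleftrightarrow> v = 0"
proof
  assume "tdeg v = 0"
  then have "\<forall>k\<in>ks v. lk v k = 0" unfolding tdeg_def by simp
  then show "v = 0"
  proof (intro poly_mapping_eqI)
    fix k assume h: "\<forall>k\<in>ks v. lk v k = 0"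
    show "lk v k = lk 0 k" using h by (cases "k \<in> ks v") (auto simp: in_keys_iff)
  qed
qed (simp add: tdeg_def)

lemma lem_diff: "lem u v \<Longrightarrow> v = u + (v - u)"
  unfolding lem_def by (intro poly_mapping_eqI) (simp add: lookup_add lookup_minus)

lemma lem_tdeg: "lem u v \<Longrightarrow> tdeg u \<le> tdeg v"
  using lem_diff tdeg_add by (metis le_add1)

lemma lem_tdeg_eq: "lem u v \<Longrightarrow> tdeg v \<le> tdeg u \<Longrightarrow> u = v"
proof -
  assume l: "lem u v" and d: "tdeg v \<le> tdeg u"
  have v: "v = u + (v - u)" using l by (rule lem_diff)
  then have "tdeg v = tdeg u + tdeg (v - u)" using tdeg_add by metis
  then have "tdeg (v - u) = 0" using d by simp
  then have "v - u = 0" using tdeg_zero_iff by blast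
  then show "u = v" using v by simp
qed

definition xy :: "nat \<Rightarrow> nat \<Rightarrow> vec" where "xy i j = sg 0 i + sg 1 j"

lemma lk_xy: "lk (xy i j) k = (if k = 0 then i else if k = 1 then j else 0)"
  by (simp add: xy_def lookup_add lookup_single when_def)

lemma xy_add: "xy i j + xy i' j' = xy (i + i') (j + j')"
  by (intro poly_mapping_eqI) (simp add: lookup_add lk_xy)

lemma xy_eq_iff: "xy i j = xy i' j' \<longleftrightarrow> i = i' \<and> j = j'"
  by (metis lk_xy zero_neq_one)

lemma xy_0: "xy 0 0 = 0"
  by (intro poly_mapping_eqI) (simp add: lk_xy)

lemma xy_eq_0: "xy i j = 0 \<longleftrightarrow> i = 0 \<and> j = 0"
  using xy_eq_iff[of i j 0 0] by (simp add: xy_0)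

lemma tdeg_single: "tdeg (sg k (i::nat)) = i"
  by (simp add: tdeg_def)

lemma tdeg_xy: "tdeg (xy i j) = i + j"
  unfolding xy_def tdeg_add tdeg_single ..

lemma ks_xy: "ks (xy i j) \<subseteq> {0, 1}"
  by (auto simp: in_keys_iff lk_xy split: if_splits)

lemma ks_xy_N: "2 \<le> N \<Longrightarrow> ks (xy i j) \<subseteq> {..<N}"
  using ks_xy[of i j] by auto

lemma lem_xy_iff: "lem (xy i j) (xy i' j') \<longleftrightarrow> i \<le> i' \<and> j \<le> j'"
  unfolding lem_def lk_xy by (metis le_refl zero_neq_one)

lemma lem_to_xy: "lem w (xy i j) \<Longrightarrow> w = xy (lk w 0) (lk w 1)"
proof (intro poly_mapping_eqI)
  fix k assume "lem w (xy i j)"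
  then have "lk w k \<le> lk (xy i j) k" unfolding lem_def by blast
  then show "lk w k = lk (xy (lk w 0) (lk w 1)) k" by (auto simp: lk_xy split: if_splits)
qed

lemma lem_xy_X: "lem w (xy i 0) \<Longrightarrow> w = xy (tdeg w) 0"
proof -
  assume l: "lem w (xy i 0)"
  then have w: "w = xy (lk w 0) (lk w 1)" by (rule lem_to_xy)
  have "lk w 1 \<le> 0" using l unfolding lem_def lk_xy by (metis zero_neq_one)
  then have "w = xy (lk w 0) 0" using w by simp
  then show ?thesis by (metis tdeg_xy add_0_right)
qed

lemma lem_xy_Y: "lem w (xy 0 j) \<Longrightarrow> w = xy 0 (tdeg w)"
proof -
  assume l: "lem w (xy 0 j)"
  then have w: "w = xy (lk w 0) (lk w 1)" by (rule lem_to_xy)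
  have "lk w 0 \<le> 0" using l unfolding lem_def lk_xy by (metis)
  then have "w = xy 0 (lk w 1)" using w by simp
  then show ?thesis by (metis tdeg_xy add_0)
qed

lemma okv_xy: "2 \<le> N \<Longrightarrow> okv N (f ` S) \<Longrightarrow> True" by simp

lemma up_sub: "okv N M \<Longrightarrow> g \<in> up N M \<Longrightarrow> lem g w \<Longrightarrow> ks w \<subseteq> {..<N} \<Longrightarrow> w \<in> up N M"
  unfolding up_def using lem_trans by blast

lemma min_deg:
  assumes "okv N M" "M \<noteq> {}"
  shows "\<exists>d. (\<exists>w\<in>up N M. tdeg w = d) \<and> (\<forall>w\<in>up N M. d \<le> tdeg w)"
proof -
  obtain g where g: "g \<in> M" using assms(2) by blast
  then have gu: "g \<in> up N M" using up_base[OF assms(1)] by blast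
  define d where "d = (LEAST t. \<exists>w\<in>up N M. tdeg w = t)"
  have ex: "\<exists>w\<in>up N M. tdeg w = tdeg g" using gu by blast
  have "\<exists>w\<in>up N M. tdeg w = d" unfolding d_def by (rule LeastI_ex) (use ex in blast)
  moreover have "\<forall>w\<in>up N M. d \<le> tdeg w" unfolding d_def by (auto intro: Least_le)
  ultimately show ?thesis by blast
qed

lemma msum_decomp: "g \<in> msum A B \<Longrightarrow> \<exists>x y. x \<in> A \<and> y \<in> B \<and> g = x + y"
  unfolding msum_def by blast

lemma TF0:
  assumes okA: "okv N MA" and okB: "okv N MB" and neA: "MA \<noteq> {}" and neB: "MB \<noteq> {}"
  and degU: "\<forall>w\<in>up N (msum MA MB). d \<le> tdeg w"
  and X: "xy d 0 \<in> up N (msum MA MB)" and Y: "xy 0 d \<in> up N (msum MA MB)"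
  shows "\<exists>dA dB. dA + dB = d \<and> xy dA 0 \<in> up N MA \<and> xy 0 dA \<in> up N MA \<and> xy dB 0 \<in> up N MB
     \<and> xy 0 dB \<in> up N MB \<and> (\<forall>w\<in>up N MA. dA \<le> tdeg w) \<and> (\<forall>w\<in>up N MB. dB \<le> tdeg w)"
proof -
  obtain dA wA where wA: "wA \<in> up N MA" "tdeg wA = dA" and dA: "\<forall>w\<in>up N MA. dA \<le> tdeg w"
    using min_deg[OF okA neA] by blast
  obtain dB wB where wB: "wB \<in> up N MB" "tdeg wB = dB" and dB: "\<forall>w\<in>up N MB. dB \<le> tdeg w"
    using min_deg[OF okB neB] by blast
  have "wA + wB \<in> up N (msum MA MB)" using up_msum[OF wA(1) wB(1)] .
  then have ge: "d \<le> dA + dB" using degU wA wB tdeg_add by metis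
  from X obtain g where g: "g \<in> msum MA MB" "lem g (xy d 0)" unfolding up_def by blast
  then obtain gA gB where gAB: "gA \<in> MA" "gB \<in> MB" "g = gA + gB" using msum_decomp by blast
  have gAu: "gA \<in> up N MA" using up_base[OF okA gAB(1)] .
  have gBu: "gB \<in> up N MB" using up_base[OF okB gAB(2)] .
  have "tdeg g \<le> d" using lem_tdeg[OF g(2)] by (simp add: tdeg_xy)
  then have sX: "tdeg gA + tdeg gB \<le> d" using gAB(3) tdeg_add by simp
  have "dA \<le> tdeg gA" "dB \<le> tdeg gB" using dA gAu dB gBu by auto
  then have eqs: "tdeg gA = dA" "tdeg gB = dB" "dA + dB = d" using sX ge by linarith+
  have "lem gA (xy d 0)" using g(2) gAB(3) lem_addD by blast
  then have "gA = xy dA 0" using lem_xy_X eqs(1) by metis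
  then have XA: "xy dA 0 \<in> up N MA" using gAu by simp
  have "lem gB (xy d 0)" using g(2) gAB(3) lem_addD add.commute by metis
  then have "gB = xy dB 0" using lem_xy_X eqs(2) by metis
  then have XB: "xy dB 0 \<in> up N MB" using gBu by simp
  from Y obtain h where h: "h \<in> msum MA MB" "lem h (xy 0 d)" unfolding up_def by blast
  then obtain hA hB where hAB: "hA \<in> MA" "hB \<in> MB" "h = hA + hB" using msum_decomp by blast
  have hAu: "hA \<in> up N MA" using up_base[OF okA hAB(1)] .
  have hBu: "hB \<in> up N MB" using up_base[OF okB hAB(2)] .
  have "tdeg h \<le> d" using lem_tdeg[OF h(2)] by (simp add: tdeg_xy)
  then have sY: "tdeg hA + tdeg hB \<le> d" using hAB(3) tdeg_add by simp
  have "dA \<le> tdeg hA" "dB \<le> tdeg hB" using dA hAu dB hBu by auto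
  then have eqs2: "tdeg hA = dA" "tdeg hB = dB" using sY eqs(3) by linarith+
  have "lem hA (xy 0 d)" using h(2) hAB(3) lem_addD by blast
  then have "hA = xy 0 dA" using lem_xy_Y eqs2(1) by metis
  then have YA: "xy 0 dA \<in> up N MA" using hAu by simp
  have "lem hB (xy 0 d)" using h(2) hAB(3) lem_addD add.commute by metis
  then have "hB = xy 0 dB" using lem_xy_Y eqs2(2) by metis
  then have YB: "xy 0 dB \<in> up N MB" using hBu by simp
  show ?thesis using eqs(3) XA YA XB YB dA dB by blast
qed

lemma pos_deg:
  assumes "0 \<notin> M" "xy 0 0 \<in> up N M" shows False
proof -
  from assms(2) obtain g where "g \<in> M" "lem g 0" unfolding up_def xy_0 by blast
  then show False using assms(1) lem_zero by blast
qed


fun subsums :: "nat list \<Rightarrow> nat set" where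
  "subsums [] = {0}"
| "subsums (x # xs) = subsums xs \<union> (\<lambda>y. x + y) ` subsums xs"

lemma subsums_0: "0 \<in> subsums xs"
  by (induction xs) auto

lemma subsums_mem: "x \<in> set xs \<Longrightarrow> x \<in> subsums xs"
proof (induction xs)
  case Nil then show ?case by simp
next
  case (Cons y ys) then show ?case using subsums_0[of ys] by force
qed

lemma subsums_filter:
  "\<sigma>1 \<in> subsums (filter P xs) \<Longrightarrow> \<sigma>2 \<in> subsums (filter (\<lambda>x. \<not> P x) xs) \<Longrightarrow> \<sigma>1 + \<sigma>2 \<in> subsums xs"
proof (induction xs arbitrary: \<sigma>1 \<sigma>2)
  case Nil then show ?case by simp
next
  case (Cons x xs)
  show ?case
  proof (cases "P x")
    case True
    then have "\<sigma>1 \<in> subsums (filter P xs) \<or> (\<exists>y\<in>subsums (filter P xs). \<sigma>1 = x + y)"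
      using Cons.prems(1) by auto
    moreover have "\<sigma>2 \<in> subsums (filter (\<lambda>x. \<not> P x) xs)" using Cons.prems(2) True by simp
    ultimately show ?thesis using Cons.IH by (auto simp: add.assoc)
  next
    case False
    then have "\<sigma>2 \<in> subsums (filter (\<lambda>x. \<not> P x) xs) \<or> (\<exists>y\<in>subsums (filter (\<lambda>x. \<not> P x) xs). \<sigma>2 = x + y)"
      using Cons.prems(2) by auto
    moreover have "\<sigma>1 \<in> subsums (filter P xs)" using Cons.prems(1) False by simp
    ultimately show ?thesis using Cons.IH by (auto simp: add.left_commute)
  qed
qed

lemma subsums_filter_sub: "subsums (filter P xs) \<subseteq> subsums xs"
  using subsums_filter[of _ P xs 0] subsums_0 by fastforce

lemma subsums_le: "\<sigma> \<in> subsums xs \<Longrightarrow> \<sigma> \<le> sum_list xs"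
  by (induction xs arbitrary: \<sigma>) (auto intro: trans_le_add2)

lemma sum_list_in: "sum_list xs \<in> subsums xs"
  by (induction xs) auto

lemma subsums_gap:
  "(\<forall>x\<in>set xs. x \<le> g) \<Longrightarrow> (\<forall>\<sigma>\<in>subsums xs. \<sigma> \<le> t \<or> t + g < \<sigma>) \<Longrightarrow> sum_list xs \<le> t"
proof (induction xs)
  case Nil then show ?case by simp
next
  case (Cons x xs)
  have "sum_list xs \<le> t" using Cons by auto
  moreover have "sum_list (x # xs) \<in> subsums (x # xs)" by (rule sum_list_in)
  ultimately show ?case using Cons.prems by force
qed

lemma length_mult_le_sum: "(\<forall>x\<in>set xs. u \<le> x) \<Longrightarrow> length xs * u \<le> sum_list xs"
  by (induction xs) auto

definition Pset :: "(nat \<Rightarrow> nat) \<Rightarrow> nat \<Rightarrow> nat set" where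
  "Pset a m = (\<lambda>I. sum a I) ` Pow {1..m}"

definition supinc :: "(nat \<Rightarrow> nat) \<Rightarrow> nat \<Rightarrow> bool" where
  "supinc a m \<longleftrightarrow> (\<forall>i<m. 2 * sum a {1..i} < a (Suc i))"

lemma Pset_0: "Pset a 0 = {0}" by (simp add: Pset_def)

lemma sum_insert_top: "I \<subseteq> {1..m} \<Longrightarrow> sum a (insert (Suc m) I) = a (Suc m) + sum a I"
  by (subst sum.insert) (auto intro: finite_subset)

lemma Pset_Suc: "Pset a (Suc m) = Pset a m \<union> (\<lambda>x. a (Suc m) + x) ` Pset a m"
proof -
  have "{1..Suc m} = insert (Suc m) {1..m}" by auto
  then have "Pow {1..Suc m} = Pow {1..m} \<union> insert (Suc m) ` Pow {1..m}" by (simp add: Pow_insert)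
  then have "Pset a (Suc m) = Pset a m \<union> (\<lambda>I. sum a (insert (Suc m) I)) ` Pow {1..m}"
    unfolding Pset_def by (simp add: image_Un image_image)
  also have "(\<lambda>I. sum a (insert (Suc m) I)) ` Pow {1..m} = (\<lambda>x. a (Suc m) + x) ` Pset a m"
    unfolding Pset_def image_image by (intro image_cong) (auto simp: sum_insert_top)
  finally show ?thesis .
qed

lemma Pset_le: "x \<in> Pset a m \<Longrightarrow> x \<le> sum a {1..m}"
  unfolding Pset_def by (auto intro: sum_mono2)

lemma supinc_mono: "supinc a (Suc m) \<Longrightarrow> supinc a m"
  by (simp add: supinc_def)

lemma LemP:
  "supinc a m \<Longrightarrow> (\<forall>x\<in>set xs. 0 < x) \<Longrightarrow> subsums xs \<subseteq> Pset a m \<Longrightarrow> length xs \<le> m"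
proof (induction m arbitrary: xs)
  case 0
  show ?case
  proof (cases xs)
    case Nil then show ?thesis by simp
  next
    case (Cons x ys)
    have "x \<in> subsums xs" by (rule subsums_mem) (simp add: Cons)
    then show ?thesis using 0 Cons by (auto simp: Pset_0)
  qed
next
  case (Suc m)
  define A where "A = a (Suc m)"
  define s where "s = sum a {1..m}"
  have As: "2 * s < A" using Suc.prems(1) by (simp add: supinc_def A_def s_def)
  have PS: "Pset a (Suc m) = Pset a m \<union> (\<lambda>x. A + x) ` Pset a m" by (simp add: Pset_Suc A_def)
  have Ple: "\<And>x. x \<in> Pset a m \<Longrightarrow> x \<le> s" using Pset_le s_def by blast
  have low: "\<And>x. x \<in> Pset a (Suc m) \<Longrightarrow> x < A \<Longrightarrow> x \<in> Pset a m" using PS by auto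
  have gapP: "\<And>x. x \<in> Pset a (Suc m) \<Longrightarrow> x \<le> s \<or> A \<le> x" using PS Ple by auto
  have topP: "\<And>x. x \<in> Pset a (Suc m) \<Longrightarrow> x \<le> A + s" using PS Ple by (auto intro: trans_le_add2)
  define ws where "ws = filter (\<lambda>x. A \<le> x) xs"
  define zs where "zs = filter (\<lambda>x. \<not> A \<le> x) xs"
  have len: "length xs = length ws + length zs"
    unfolding ws_def zs_def by (simp add: sum_length_filter_compl)
  have ws1: "length ws \<le> 1"
  proof (rule ccontr)
    assume "\<not> length ws \<le> 1"
    then obtain w1 ws' where w': "ws = w1 # ws'" by (cases ws) auto
    with \<open>\<not> length ws \<le> 1\<close> obtain w2 rest where w'': "ws' = w2 # rest" by (cases ws') auto
    have w: "ws = w1 # w2 # rest" using w' w'' by simp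
    have "w1 + (w2 + 0) \<in> subsums ws" unfolding w using subsums_0[of rest] by auto
    then have "w1 + w2 \<in> Pset a (Suc m)" using subsums_filter_sub[of "\<lambda>x. A \<le> x" xs] Suc.prems(3) ws_def by auto
    then have "w1 + w2 \<le> A + s" by (rule topP)
    moreover have "w1 \<in> set ws" "w2 \<in> set ws" using w by auto
    then have "A \<le> w1" "A \<le> w2" unfolding ws_def by auto
    ultimately show False using As by linarith
  qed
  have zsP: "subsums zs \<subseteq> Pset a (Suc m)"
    using subsums_filter_sub[of "\<lambda>x. \<not> A \<le> x" xs] Suc.prems(3) zs_def by auto
  have zle: "\<forall>x\<in>set zs. x \<le> s"
  proof
    fix x assume x: "x \<in> set zs"
    then have "x \<in> Pset a (Suc m)" using zsP subsums_mem by blast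
    moreover have "x < A" using x zs_def by auto
    ultimately show "x \<le> s" using low Ple by blast
  qed
  have g: "\<forall>\<sigma>\<in>subsums zs. \<sigma> \<le> s \<or> s + s < \<sigma>"
  proof
    fix \<sigma> assume "\<sigma> \<in> subsums zs"
    then have "\<sigma> \<in> Pset a (Suc m)" using zsP by blast
    then have "\<sigma> \<le> s \<or> A \<le> \<sigma>" by (rule gapP)
    then show "\<sigma> \<le> s \<or> s + s < \<sigma>" using As by linarith
  qed
  have zsum: "sum_list zs \<le> s" by (rule subsums_gap[OF zle g])
  have "subsums zs \<subseteq> Pset a m"
  proof
    fix \<sigma> assume sig: "\<sigma> \<in> subsums zs"
    then have "\<sigma> \<le> s" using subsums_le[OF sig] zsum by linarith
    then have "\<sigma> < A" using As by linarith
    then show "\<sigma> \<in> Pset a m" using low sig zsP by blast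
  qed
  then have "length zs \<le> m"
    using Suc.IH[OF supinc_mono[OF Suc.prems(1)]] Suc.prems(2) zs_def by auto
  then show ?case using len ws1 by simp
qed


lemma sum_split_top:
  assumes "I \<subseteq> {1..Suc m}"
  shows "sum a I = sum a (I - {Suc m}) + (if Suc m \<in> I then a (Suc m) else 0)"
proof (cases "Suc m \<in> I")
  case True
  have fin: "finite I" using assms finite_subset by blast
  show ?thesis using True sum.remove[OF fin True, of a] by (simp add: add.commute)
next
  case False then show ?thesis by simp
qed

lemma uniq:
  "supinc a m \<Longrightarrow> I \<subseteq> {1..m} \<Longrightarrow> J \<subseteq> {1..m} \<Longrightarrow> K \<subseteq> {1..m} \<Longrightarrow> L \<subseteq> {1..m} \<Longrightarrow>
   sum a I + sum a J = sum a K + sum a L \<Longrightarrow>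
   of_bool (t \<in> I) + of_bool (t \<in> J) = (of_bool (t \<in> K) + of_bool (t \<in> L) :: nat)"
proof (induction m arbitrary: I J K L)
  case 0
  then show ?case by auto
next
  case (Suc m)
  define A where "A = a (Suc m)"
  define s where "s = sum a {1..m}"
  have As: "2 * s < A" using Suc.prems(1) by (simp add: supinc_def A_def s_def)
  have sub: "\<And>X. X \<subseteq> {1..Suc m} \<Longrightarrow> X - {Suc m} \<subseteq> {1..m}" by auto
  have le: "\<And>X. X \<subseteq> {1..Suc m} \<Longrightarrow> sum a (X - {Suc m}) \<le> s"
    unfolding s_def by (rule sum_mono2) (auto)
  have spl: "\<And>X. X \<subseteq> {1..Suc m} \<Longrightarrow> sum a X = sum a (X - {Suc m}) + (if Suc m \<in> X then A else 0)"
    unfolding A_def by (rule sum_split_top)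
  have lI: "sum a (I - {Suc m}) \<le> s" using le Suc.prems(2) by blast
  have lJ: "sum a (J - {Suc m}) \<le> s" using le Suc.prems(3) by blast
  have lK: "sum a (K - {Suc m}) \<le> s" using le Suc.prems(4) by blast
  have lL: "sum a (L - {Suc m}) \<le> s" using le Suc.prems(5) by blast
  have E: "sum a (I - {Suc m}) + (if Suc m \<in> I then A else 0) + (sum a (J - {Suc m}) + (if Suc m \<in> J then A else 0))
         = sum a (K - {Suc m}) + (if Suc m \<in> K then A else 0) + (sum a (L - {Suc m}) + (if Suc m \<in> L then A else 0))"
    using Suc.prems(6) spl[OF Suc.prems(2)] spl[OF Suc.prems(3)] spl[OF Suc.prems(4)] spl[OF Suc.prems(5)] by simp
  have cnt: "of_bool (Suc m \<in> I) + of_bool (Suc m \<in> J) = (of_bool (Suc m \<in> K) + of_bool (Suc m \<in> L) :: nat)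
     \<and> sum a (I - {Suc m}) + sum a (J - {Suc m}) = sum a (K - {Suc m}) + sum a (L - {Suc m})"
    using E lI lJ lK lL As
    by (cases "Suc m \<in> I"; cases "Suc m \<in> J"; cases "Suc m \<in> K"; cases "Suc m \<in> L"; simp; linarith)
  have IH: "of_bool (t \<in> I - {Suc m}) + of_bool (t \<in> J - {Suc m}) = (of_bool (t \<in> K - {Suc m}) + of_bool (t \<in> L - {Suc m}) :: nat)"
    using Suc.IH[OF supinc_mono[OF Suc.prems(1)] sub[OF Suc.prems(2)] sub[OF Suc.prems(3)] sub[OF Suc.prems(4)] sub[OF Suc.prems(5)]] cnt
    by blast
  show ?case
  proof (cases "t = Suc m")
    case True then show ?thesis using cnt by simp
  next
    case False then show ?thesis using IH by simp
  qed
qed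

lemma Pset_elem: "x \<in> Pset a m \<Longrightarrow> \<exists>X. X \<subseteq> {1..m} \<and> x = sum a X"
  unfolding Pset_def by auto

lemma C1:
  fixes a :: "nat \<Rightarrow> nat" and n :: nat
  assumes n2: "2 \<le> n" and pos: "\<forall>i\<in>{1..n+1}. 0 < a i"
    and c1: "a (n+1) = sum a {1..n-1} + 2 * a n"
    and c2: "\<forall>i\<in>{1..n-1}. 2 * sum a {1..i} < a (i+1)"
    and xpos: "\<forall>x\<in>set xs. 0 < x" and ss: "subsums xs \<subseteq> Pset a (n+1)"
  shows "length xs \<le> n + 1"
proof -
  define m where "m = n - 1"
  define s where "s = sum a {1..m}"
  define u where "u = a n"
  define P' where "P' = Pset a m"
  have nm: "n = Suc m" using n2 m_def by simp
  have sup: "supinc a m"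
    unfolding supinc_def
  proof (intro allI impI)
    fix i assume i: "i < m"
    show "2 * sum a {1..i} < a (Suc i)"
    proof (cases "i = 0")
      case True then show ?thesis using pos n2 by simp
    next
      case False
      then have "i \<in> {1..n-1}" using i m_def by simp
      then show ?thesis using c2 by simp
    qed
  qed
  have us: "2 * s < u"
  proof -
    have "m \<in> {1..n-1}" using n2 m_def by simp
    then have "2 * sum a {1..m} < a (m+1)" using c2 m_def by blast
    then show ?thesis using nm unfolding s_def u_def by simp
  qed
  have beta: "a (n+1) = s + 2 * u" using c1 unfolding s_def u_def m_def by simp
  have Pn: "Pset a n = P' \<union> (\<lambda>x. u + x) ` P'" unfolding P'_def u_def nm by (rule Pset_Suc)
  have Pn1: "Pset a (n+1) = Pset a n \<union> (\<lambda>x. a (n+1) + x) ` Pset a n" using Pset_Suc[of a n] by simp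
  have Ple: "\<And>x. x \<in> P' \<Longrightarrow> x \<le> s" unfolding P'_def s_def by (rule Pset_le)
  have Cdec: "\<And>c. c \<in> Pset a (n+1) \<Longrightarrow> c \<in> P' \<or> (u \<le> c \<and> c - u \<in> P') \<or> (s + 2*u \<le> c \<and> c - (s + 2*u) \<in> P')
        \<or> (s + 3*u \<le> c \<and> c - (s + 3*u) \<in> P')"
  proof -
    fix c assume "c \<in> Pset a (n+1)"
    then have "c \<in> P' \<or> c \<in> (\<lambda>x. u + x) ` P' \<or> c \<in> (\<lambda>x. s + 2*u + x) ` P' \<or> c \<in> (\<lambda>x. s + 2*u + (u + x)) ` P'"
      using Pn Pn1 beta by auto
    then show "c \<in> P' \<or> (u \<le> c \<and> c - u \<in> P') \<or> (s + 2*u \<le> c \<and> c - (s + 2*u) \<in> P')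
        \<or> (s + 3*u \<le> c \<and> c - (s + 3*u) \<in> P')"
    proof (elim disjE)
      assume "c \<in> (\<lambda>x. s + 2*u + (u + x)) ` P'"
      then obtain x where "x \<in> P'" "c = s + 2*u + (u + x)" by blast
      then show ?thesis by simp
    qed auto
  qed
  have Cd: "\<And>c. c \<in> Pset a (n+1) \<Longrightarrow> (c \<in> P' \<and> c \<le> s) \<or> (u \<le> c \<and> c - u \<in> P' \<and> c \<le> u + s)
       \<or> (s + 2*u \<le> c \<and> c - (s + 2*u) \<in> P' \<and> c \<le> 2*s + 2*u) \<or> (s + 3*u \<le> c \<and> c - (s + 3*u) \<in> P' \<and> c \<le> 2*s + 3*u)"
  proof -
    fix c assume c: "c \<in> Pset a (n+1)"
    show "?thesis c"
    proof (rule disjE[OF Cdec[OF c]])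
      assume "c \<in> P'" then show ?thesis using Ple by blast
    next
      assume "(u \<le> c \<and> c - u \<in> P') \<or> (s + 2*u \<le> c \<and> c - (s + 2*u) \<in> P') \<or> (s + 3*u \<le> c \<and> c - (s + 3*u) \<in> P')"
      then show ?thesis
      proof (elim disjE conjE)
        assume "u \<le> c" "c - u \<in> P'"
        moreover have "c - u \<le> s" using Ple \<open>c - u \<in> P'\<close> by blast
        ultimately have "c \<le> u + s" by linarith
        then show ?thesis using \<open>u \<le> c\<close> \<open>c - u \<in> P'\<close> by blast
      next
        assume "s + 2*u \<le> c" "c - (s + 2*u) \<in> P'"
        moreover have "c - (s + 2*u) \<le> s" using Ple \<open>c - (s + 2*u) \<in> P'\<close> by blast
        ultimately have "c \<le> 2*s + 2*u" by linarith
        then show ?thesis using \<open>s + 2*u \<le> c\<close> \<open>c - (s + 2*u) \<in> P'\<close> by blast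
      next
        assume "s + 3*u \<le> c" "c - (s + 3*u) \<in> P'"
        moreover have "c - (s + 3*u) \<le> s" using Ple \<open>c - (s + 3*u) \<in> P'\<close> by blast
        ultimately have "c \<le> 2*s + 3*u" by linarith
        then show ?thesis using \<open>s + 3*u \<le> c\<close> \<open>c - (s + 3*u) \<in> P'\<close> by blast
      qed
    qed
  qed
  define L where "L = filter (\<lambda>x. x \<le> s) xs"
  define H where "H = filter (\<lambda>x. \<not> x \<le> s) xs"
  have len: "length xs = length L + length H"
    unfolding L_def H_def by (simp add: sum_length_filter_compl)
  have subL: "subsums L \<subseteq> Pset a (n+1)" using ss subsums_filter_sub L_def by blast
  have subH: "subsums H \<subseteq> Pset a (n+1)" using ss subsums_filter_sub H_def by blast
  have Hge: "\<forall>h\<in>set H. u \<le> h"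
  proof
    fix h assume h: "h \<in> set H"
    then have "h \<in> Pset a (n+1)" using subH subsums_mem by blast
    moreover have "s < h" using h H_def by simp
    ultimately show "u \<le> h" using Cd[of h] by auto
  qed
  have sumH: "sum_list H \<le> 2*s + 3*u"
  proof -
    have "sum_list H \<in> Pset a (n+1)" using subH sum_list_in by blast
    from Cd[OF this] show ?thesis using us by auto
  qed
  have H3: "length H \<le> 3"
  proof (rule ccontr)
    assume "\<not> length H \<le> 3"
    then have "4 * u \<le> length H * u" by simp
    moreover have "length H * u \<le> sum_list H" using length_mult_le_sum Hge by blast
    ultimately show False using sumH us by linarith
  qed
  have Lle: "\<forall>x\<in>set L. x \<le> s" unfolding L_def by simp
  have gapL: "\<forall>\<sigma>\<in>subsums L. \<sigma> \<le> s \<or> s + s < \<sigma>"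
  proof
    fix \<sigma> assume "\<sigma> \<in> subsums L"
    then have "\<sigma> \<in> Pset a (n+1)" using subL by blast
    from Cd[OF this] show "\<sigma> \<le> s \<or> s + s < \<sigma>" using us by auto
  qed
  have sL: "sum_list L \<le> s" by (rule subsums_gap[OF Lle gapL])
  have LP: "subsums L \<subseteq> P'"
  proof
    fix \<sigma> assume sig: "\<sigma> \<in> subsums L"
    then have "\<sigma> \<le> s" using subsums_le[OF sig] sL by linarith
    moreover have "\<sigma> \<in> Pset a (n+1)" using sig subL by blast
    ultimately show "\<sigma> \<in> P'" using Cd[of \<sigma>] us by auto
  qed
  have Lpos: "\<forall>x\<in>set L. 0 < x" using xpos L_def by simp
  have lenL: "length L \<le> m" using LemP[OF sup Lpos] LP P'_def by blast
  show ?thesis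
  proof (cases "length H = 3 \<and> L \<noteq> []")
    case False
    show ?thesis
    proof (cases "L = []")
      case True then show ?thesis using len H3 n2 by simp
    next
      case Ln: False
      then have "length H \<noteq> 3" using False by simp
      then show ?thesis using len lenL H3 nm by simp
    qed
  next
    case True
    then have l3: "length H = 3" by simp
    then obtain h1 t1 where t1: "H = h1 # t1" by (cases H) auto
    then have "length t1 = 2" using l3 by simp
    then obtain h2 t2 where t2: "t1 = h2 # t2" by (cases t1) auto
    then have "length t2 = 1" using \<open>length t1 = 2\<close> by simp
    then obtain h3 where t3: "t2 = [h3]" by (cases t2) auto
    have H: "H = [h1, h2, h3]" using t1 t2 t3 by simp
    obtain x where x: "x \<in> set L" using True by (cases L) auto
    have hge: "u \<le> h1" "u \<le> h2" "u \<le> h3" using Hge H by auto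
    have hs: "h1 + h2 + h3 \<le> 2*s + 3*u" using sumH H by simp
    have "h1 \<in> subsums H" by (rule subsums_mem) (simp add: H)
    then have h1C: "h1 \<in> Pset a (n+1)" using subH by blast
    have "h2 \<in> subsums H" by (rule subsums_mem) (simp add: H)
    then have h2C: "h2 \<in> Pset a (n+1)" using subH by blast
    have r1: "h1 - u \<in> P'" using Cd[OF h1C] hge hs us by auto
    have r2: "h2 - u \<in> P'" using Cd[OF h2C] hge hs us by auto
    have "h1 + (h2 + 0) \<in> subsums H" unfolding H using subsums_0[of "[h3]"] by auto
    then have h12C: "h1 + h2 \<in> Pset a (n+1)" using subH by auto
    have r12: "s + 2*u \<le> h1 + h2 \<and> h1 + h2 - (s + 2*u) \<in> P'"
      using Cd[OF h12C] hge hs us by auto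
    have xle: "x \<le> s" "0 < x" using x Lle Lpos by auto
    have xL: "x \<in> subsums L" using x subsums_mem by blast
    then have xC: "x \<in> Pset a (n+1)" using subL by blast
    have xP: "x \<in> P'" using Cd[OF xC] xle us by auto
    have "h1 \<in> subsums H" "h2 \<in> subsums H" using H subsums_mem by auto
    then have "x + h1 \<in> subsums xs" "x + h2 \<in> subsums xs"
      using subsums_filter[OF xL[unfolded L_def]] H_def by auto
    then have xh1C: "x + h1 \<in> Pset a (n+1)" and xh2C: "x + h2 \<in> Pset a (n+1)" using ss by auto
    have xr1: "x + h1 - u \<in> P'" using Cd[OF xh1C] hge hs us xle by auto
    have xr2: "x + h2 - u \<in> P'" using Cd[OF xh2C] hge hs us xle by auto
    obtain X where X: "X \<subseteq> {1..m}" "x = sum a X" using Pset_elem[OF xP[unfolded P'_def]] by blast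
    obtain I1 where I1: "I1 \<subseteq> {1..m}" "h1 - u = sum a I1" using Pset_elem[OF r1[unfolded P'_def]] by blast
    obtain I2 where I2: "I2 \<subseteq> {1..m}" "h2 - u = sum a I2" using Pset_elem[OF r2[unfolded P'_def]] by blast
    obtain K where K: "K \<subseteq> {1..m}" "h1 + h2 - (s + 2*u) = sum a K" using Pset_elem[OF r12[THEN conjunct2, unfolded P'_def]] by blast
    obtain Y1 where Y1: "Y1 \<subseteq> {1..m}" "x + h1 - u = sum a Y1" using Pset_elem[OF xr1[unfolded P'_def]] by blast
    obtain Y2 where Y2: "Y2 \<subseteq> {1..m}" "x + h2 - u = sum a Y2" using Pset_elem[OF xr2[unfolded P'_def]] by blast
    have "X \<noteq> {}" using X xle by auto
    then obtain t where t: "t \<in> X" by blast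
    have e1: "sum a X + sum a I1 = sum a Y1 + sum a {}" using X(2) I1(2) Y1(2) hge sum.empty[of a] by linarith
    have e2: "sum a X + sum a I2 = sum a Y2 + sum a {}" using X(2) I2(2) Y2(2) hge sum.empty[of a] by linarith
    have e3: "sum a I1 + sum a I2 = sum a {1..m} + sum a K" using I1(2) I2(2) K(2) r12 hge s_def by linarith
    have "of_bool (t \<in> X) + of_bool (t \<in> I1) = (of_bool (t \<in> Y1) + of_bool (t \<in> {}) :: nat)"
      by (rule uniq[OF sup X(1) I1(1) Y1(1) _ e1]) simp
    then have n1: "t \<notin> I1" using t by (cases "t \<in> Y1") auto
    have "of_bool (t \<in> X) + of_bool (t \<in> I2) = (of_bool (t \<in> Y2) + of_bool (t \<in> {}) :: nat)"
      by (rule uniq[OF sup X(1) I2(1) Y2(1) _ e2]) simp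
    then have n2': "t \<notin> I2" using t by (cases "t \<in> Y2") auto
    have "of_bool (t \<in> I1) + of_bool (t \<in> I2) = (of_bool (t \<in> {1..m}) + of_bool (t \<in> K) :: nat)"
      by (rule uniq[OF sup I1(1) I2(1) _ K(1) e3]) simp
    then show ?thesis using n1 n2' t X(1) by (cases "t \<in> K") auto
  qed
qed


definition Hs :: "nat \<Rightarrow> nat set \<Rightarrow> vec set \<Rightarrow> bool" where
  "Hs d C U \<longleftrightarrow> (\<forall>w\<in>U. d \<le> tdeg w) \<and> (\<forall>c. c \<in> C \<longleftrightarrow> c \<le> d \<and> xy (d - c) c \<in> U)"

lemma TF2:
  assumes okA: "okv N MA" and okB: "okv N MB" and neA: "MA \<noteq> {}" and neB: "MB \<noteq> {}"
  and nzA: "0 \<notin> MA"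
  and H: "Hs d C (up N (msum MA MB))" and C0: "0 \<in> C" and Cd: "d \<in> C"
  shows "\<exists>dA dB CB. 1 \<le> dA \<and> dA + dB = d \<and> Hs dB CB (up N MB) \<and> 0 \<in> CB \<and> dB \<in> CB
            \<and> CB \<subseteq> C \<and> (\<forall>c\<in>CB. dA + c \<in> C)"
proof -
  let ?U = "up N (msum MA MB)"
  have degU: "\<forall>w\<in>?U. d \<le> tdeg w" using H unfolding Hs_def by blast
  have memC: "\<And>c. c \<in> C \<longleftrightarrow> c \<le> d \<and> xy (d - c) c \<in> ?U" using H unfolding Hs_def by blast
  have X: "xy d 0 \<in> ?U" using memC[of 0] C0 by simp
  have Y: "xy 0 d \<in> ?U" using memC[of d] Cd by simp
  obtain dA dB where T: "dA + dB = d" "xy dA 0 \<in> up N MA" "xy 0 dA \<in> up N MA" "xy dB 0 \<in> up N MB"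
     "xy 0 dB \<in> up N MB" "\<forall>w\<in>up N MA. dA \<le> tdeg w" "\<forall>w\<in>up N MB. dB \<le> tdeg w"
    using TF0[OF okA okB neA neB degU X Y] by blast
  have dA1: "1 \<le> dA"
  proof (rule ccontr)
    assume "\<not> 1 \<le> dA" then have "dA = 0" by simp
    then show False using pos_deg[OF nzA] T(2) by simp
  qed
  define CB where "CB = {c. c \<le> dB \<and> xy (dB - c) c \<in> up N MB}"
  have HB: "Hs dB CB (up N MB)" unfolding Hs_def CB_def using T(7) by blast
  have CB0: "0 \<in> CB" unfolding CB_def using T(4) by simp
  have CBd: "dB \<in> CB" unfolding CB_def using T(5) by simp
  have sub: "CB \<subseteq> C"
  proof
    fix c assume c: "c \<in> CB"
    then have cle: "c \<le> dB" and cu: "xy (dB - c) c \<in> up N MB" unfolding CB_def by auto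
    have "xy dA 0 + xy (dB - c) c \<in> ?U" by (rule up_msum[OF T(2) cu])
    moreover have "xy dA 0 + xy (dB - c) c = xy (d - c) c" using cle T(1) by (simp add: xy_add)
    ultimately show "c \<in> C" using memC cle T(1) by simp
  qed
  have shift: "\<forall>c\<in>CB. dA + c \<in> C"
  proof
    fix c assume c: "c \<in> CB"
    then have cle: "c \<le> dB" and cu: "xy (dB - c) c \<in> up N MB" unfolding CB_def by auto
    have "xy 0 dA + xy (dB - c) c \<in> ?U" by (rule up_msum[OF T(3) cu])
    moreover have "d - (dA + c) = dB - c" using T(1) by linarith
    then have "xy 0 dA + xy (dB - c) c = xy (d - (dA + c)) (dA + c)" by (simp add: xy_add)
    ultimately show "dA + c \<in> C" using memC cle T(1) by simp
  qed
  show ?thesis using dA1 T(1) HB CB0 CBd sub shift by blast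
qed

lemma atom_unpack:
  assumes "Mon_atom N (A :: 'k::field mpoly set)"
  shows "\<exists>M. okv N M \<and> M \<noteq> {} \<and> 0 \<notin> M \<and> A = gen_ideal N (mono ` M)"
proof -
  have "A \<in> Mon N" "A \<noteq> polyring N" using assms unfolding Mon_atom_def by auto
  then obtain M where M: "okv N M" "M \<noteq> {}" "A = gen_ideal N (mono ` M)" using Mon_rep by blast
  have "0 \<notin> M" using gen_eq_R_iff[OF M(1), where 'k='k] M(3) \<open>A \<noteq> polyring N\<close> by blast
  then show ?thesis using M by blast
qed

lemma UB_ind:
  "\<forall>A\<in>set As. Mon_atom N (A :: 'k::field mpoly set) \<Longrightarrow> okv N M \<Longrightarrow>
   foldr (ideal_mult N) As (polyring N) = gen_ideal N (mono ` M) \<Longrightarrow> Hs d C (up N M) \<Longrightarrow>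
   0 \<in> C \<Longrightarrow> d \<in> C \<Longrightarrow> \<exists>xs. length xs = length As \<and> (\<forall>x\<in>set xs. 0 < x) \<and> subsums xs \<subseteq> C"
proof (induction As arbitrary: M d C)
  case Nil then show ?case by (intro exI[of _ "[]"]) simp
next
  case (Cons A As)
  obtain MA where A: "okv N MA" "MA \<noteq> {}" "0 \<notin> MA" "A = gen_ideal N (mono ` MA)"
    using atom_unpack[of N A] Cons.prems(1) by auto
  have monAs: "\<forall>B\<in>set As. B \<in> Mon N" using Cons.prems(1) unfolding Mon_atom_def by auto
  obtain MB where B: "okv N MB" "MB \<noteq> {}" "foldr (ideal_mult N) As (polyring N) = gen_ideal N (mono ` MB)"
    using foldr_rep[OF monAs] by blast
  have "gen_ideal N (mono ` M) = ideal_mult N A (foldr (ideal_mult N) As (polyring N))"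
    using Cons.prems(3) by simp
  also have "\<dots> = gen_ideal N (mono ` msum MA MB)" using A(4) B(3) ideal_mult_gen[OF A(1) B(1)] by simp
  finally have "up N M = up N (msum MA MB)"
    using gen_eq_iff[OF Cons.prems(2) okv_msum[OF A(1) B(1)], where 'k='k] by blast
  then have H: "Hs d C (up N (msum MA MB))" using Cons.prems(4) by simp
  obtain dA dB CB where T: "1 \<le> dA" "dA + dB = d" "Hs dB CB (up N MB)" "0 \<in> CB" "dB \<in> CB"
     "CB \<subseteq> C" "\<forall>c\<in>CB. dA + c \<in> C"
    using TF2[OF A(1) B(1) A(2) B(2) A(3) H Cons.prems(5,6)] by blast
  have "\<forall>A\<in>set As. Mon_atom N A" using Cons.prems(1) by simp
  then obtain xs where xs: "length xs = length As" "\<forall>x\<in>set xs. 0 < x" "subsums xs \<subseteq> CB"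
    using Cons.IH[OF _ B(1) B(3) T(3) T(4) T(5)] by blast
  have "subsums (dA # xs) \<subseteq> C" using xs(3) T(6) T(7) by auto
  moreover have "\<forall>x\<in>set (dA # xs). 0 < x" using xs(2) T(1) by auto
  ultimately show ?case using xs(1) by (intro exI[of _ "dA # xs"]) simp
qed


lemma prod_data:
  assumes ok: "okv N G" and degG: "\<forall>g\<in>G. d \<le> tdeg g" and X: "xy d 0 \<in> G" and Y: "xy 0 d \<in> G"
    and P: "P \<in> Mon N" "P \<noteq> polyring N" and Q: "Q \<in> Mon N" "Q \<noteq> polyring N"
    and eq: "(gen_ideal N (mono ` G) :: 'k::field mpoly set) = ideal_mult N P Q"
  shows "\<exists>MP MQ dP dQ. okv N MP \<and> okv N MQ \<and> 0 \<notin> MP \<and> 0 \<notin> MQ \<and> up N G = up N (msum MP MQ)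
     \<and> 1 \<le> dP \<and> 1 \<le> dQ \<and> dP + dQ = d \<and> xy dP 0 \<in> up N MP \<and> xy 0 dP \<in> up N MP
     \<and> xy dQ 0 \<in> up N MQ \<and> xy 0 dQ \<in> up N MQ"
proof -
  obtain MP where MP: "okv N MP" "MP \<noteq> {}" "P = gen_ideal N (mono ` MP)" using Mon_rep[OF P(1)] by blast
  obtain MQ where MQ: "okv N MQ" "MQ \<noteq> {}" "Q = gen_ideal N (mono ` MQ)" using Mon_rep[OF Q(1)] by blast
  have zP: "0 \<notin> MP" using gen_eq_R_iff[OF MP(1), where 'k='k] MP(3) P(2) by blast
  have zQ: "0 \<notin> MQ" using gen_eq_R_iff[OF MQ(1), where 'k='k] MQ(3) Q(2) by blast
  have "(gen_ideal N (mono ` G) :: 'k mpoly set) = gen_ideal N (mono ` msum MP MQ)"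
    using eq MP(3) MQ(3) ideal_mult_gen[OF MP(1) MQ(1), where 'k='k] by simp
  then have U: "up N G = up N (msum MP MQ)" using gen_eq_iff[OF ok okv_msum[OF MP(1) MQ(1)], where 'k='k] by blast
  have degU: "\<forall>w\<in>up N (msum MP MQ). d \<le> tdeg w"
  proof
    fix w assume "w \<in> up N (msum MP MQ)"
    then have "w \<in> up N G" using U by simp
    then obtain g where "g \<in> G" "lem g w" unfolding up_def by blast
    then show "d \<le> tdeg w" using degG lem_tdeg order_trans by blast
  qed
  have X': "xy d 0 \<in> up N (msum MP MQ)" using up_base[OF ok X] U by simp
  have Y': "xy 0 d \<in> up N (msum MP MQ)" using up_base[OF ok Y] U by simp
  obtain dP dQ where T: "dP + dQ = d" "xy dP 0 \<in> up N MP" "xy 0 dP \<in> up N MP" "xy dQ 0 \<in> up N MQ"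
     "xy 0 dQ \<in> up N MQ"
    using TF0[OF MP(1) MQ(1) MP(2) MQ(2) degU X' Y'] by blast
  have "1 \<le> dP"
  proof (rule ccontr)
    assume "\<not> 1 \<le> dP" then have "dP = 0" by simp
    then show False using pos_deg[OF zP] T(2) by simp
  qed
  moreover have "1 \<le> dQ"
  proof (rule ccontr)
    assume "\<not> 1 \<le> dQ" then have "dQ = 0" by simp
    then show False using pos_deg[OF zQ] T(4) by simp
  qed
  ultimately show ?thesis using MP(1) MQ(1) zP zQ U T by blast
qed

lemma xy_eq_0': "0 = xy i j \<longleftrightarrow> i = 0 \<and> j = 0"
  using xy_eq_0[of i j] by (metis)

lemma okv_img_xy: "2 \<le> N \<Longrightarrow> okv N ((\<lambda>c. xy (f c) (g c)) ` S)"
  unfolding okv_def using ks_xy_N by blast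

lemma Atom2:
  assumes N: "2 \<le> N" and al: "0 < \<alpha>"
  shows "Mon_atom N (gen_ideal N (mono ` {xy \<alpha> 0, xy 0 \<alpha>}) :: 'k::field mpoly set)"
proof -
  let ?G = "{xy \<alpha> 0, xy 0 \<alpha>}"
  have ok: "okv N ?G" unfolding okv_def using ks_xy_N[OF N] by blast
  have inMon: "(gen_ideal N (mono ` ?G) :: 'k mpoly set) \<in> Mon N" by (rule gen_in_Mon[OF ok]) simp
  have z: "0 \<notin> ?G" using al by (auto simp: xy_eq_0 xy_eq_0')
  have neR: "(gen_ideal N (mono ` ?G) :: 'k mpoly set) \<noteq> polyring N" using gen_eq_R_iff[OF ok, where 'k='k] z by blast
  have degG: "\<forall>g\<in>?G. \<alpha> \<le> tdeg g" by (auto simp: tdeg_xy)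
  have "\<not> (\<exists>P Q. P \<in> Mon N - {polyring N} \<and> Q \<in> Mon N - {polyring N} \<and> (gen_ideal N (mono ` ?G) :: 'k mpoly set) = ideal_mult N P Q)"
  proof
    assume "\<exists>P Q. P \<in> Mon N - {polyring N} \<and> Q \<in> Mon N - {polyring N} \<and> (gen_ideal N (mono ` ?G) :: 'k mpoly set) = ideal_mult N P Q"
    then obtain P Q where PQ: "P \<in> Mon N" "P \<noteq> polyring N" "Q \<in> Mon N" "Q \<noteq> polyring N"
       "(gen_ideal N (mono ` ?G) :: 'k mpoly set) = ideal_mult N P Q" by blast
    obtain MP MQ dP dQ where D: "up N ?G = up N (msum MP MQ)" "1 \<le> dP" "1 \<le> dQ" "dP + dQ = \<alpha>"
       "xy dP 0 \<in> up N MP" "xy 0 dQ \<in> up N MQ"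
      using prod_data[OF ok degG _ _ PQ(1,2,3,4,5)] by auto
    have "xy dP 0 + xy 0 dQ \<in> up N (msum MP MQ)" by (rule up_msum[OF D(5) D(6)])
    then have "xy dP dQ \<in> up N ?G" using D(1) by (simp add: xy_add)
    then obtain g where g: "g \<in> ?G" "lem g (xy dP dQ)" unfolding up_def by blast
    then show False using D(2,3,4) by (auto simp: lem_xy_iff)
  qed
  then show ?thesis unfolding Mon_atom_def using inMon neR by blast
qed

lemma Esub:
  assumes okA: "okv N MA" and okB: "okv N MB" and zA: "0 \<notin> MA"
    and Gdef: "G = (\<lambda>c. xy (d - c) c) ` S \<union> {xy e1 e2}"
    and U: "up N G = up N (msum MA MB)"
    and dtb: "d = t + b" and gap: "\<forall>c\<in>S. c \<le> t \<or> b \<le> c"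
    and e1: "e1 + t < b" and e2: "e2 + t < b"
    and dl: "\<delta> \<le> t" and XA: "xy \<delta> 0 \<in> up N MA" and YA: "xy 0 \<delta> \<in> up N MA"
    and N: "2 \<le> N"
  shows False
proof -
  have okG: "okv N G" unfolding Gdef okv_def using ks_xy_N[OF N] by blast
  have "xy e1 e2 \<in> up N G" using up_base[OF okG] Gdef by simp
  then have "xy e1 e2 \<in> up N (msum MA MB)" using U by simp
  then obtain g where g: "g \<in> msum MA MB" "lem g (xy e1 e2)" unfolding up_def by blast
  then obtain p q where pq: "p \<in> MA" "q \<in> MB" "g = p + q" using msum_decomp by blast
  have lpq: "\<And>k. lk p k + lk q k \<le> lk (xy e1 e2) k" using g(2) pq(3) unfolding lem_def by (simp add: lookup_add)
  have qu: "q \<in> up N MB" using up_base[OF okB pq(2)] .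
  have p1: "lk p 1 = 0"
  proof -
    have "xy \<delta> 0 + q \<in> up N (msum MA MB)" by (rule up_msum[OF XA qu])
    then have "xy \<delta> 0 + q \<in> up N G" using U by simp
    then obtain h where h: "h \<in> G" "lem h (xy \<delta> 0 + q)" unfolding up_def by blast
    have lh: "\<And>k. lk h k \<le> lk (xy \<delta> 0) k + lk q k" using h(2) unfolding lem_def by (simp add: lookup_add)
    show ?thesis
    proof (cases "h = xy e1 e2")
      case True
      have "lk p 1 + lk q 1 \<le> e2" using lpq[of 1] by (simp add: lk_xy)
      moreover have "e2 \<le> lk q 1" using lh[of 1] True by (simp add: lk_xy)
      ultimately show ?thesis by simp
    next
      case False
      then obtain c where c: "c \<in> S" "h = xy (d - c) c" using h(1) Gdef by auto
      have "c \<le> lk q 1" using lh[of 1] c(2) by (simp add: lk_xy)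
      moreover have "lk q 1 \<le> e2" using lpq[of 1] by (simp add: lk_xy)
      ultimately have "c < b" using e2 by linarith
      then have "c \<le> t" using gap c(1) by force
      moreover have "d - c \<le> \<delta> + lk q 0" using lh[of 0] c(2) by (simp add: lk_xy)
      moreover have "lk q 0 \<le> e1" using lpq[of 0] by (simp add: lk_xy)
      ultimately show ?thesis using dtb dl e1 by linarith
    qed
  qed
  have p0: "lk p 0 = 0"
  proof -
    have "xy 0 \<delta> + q \<in> up N (msum MA MB)" by (rule up_msum[OF YA qu])
    then have "xy 0 \<delta> + q \<in> up N G" using U by simp
    then obtain h where h: "h \<in> G" "lem h (xy 0 \<delta> + q)" unfolding up_def by blast
    have lh: "\<And>k. lk h k \<le> lk (xy 0 \<delta>) k + lk q k" using h(2) unfolding lem_def by (simp add: lookup_add)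
    show ?thesis
    proof (cases "h = xy e1 e2")
      case True
      have "lk p 0 + lk q 0 \<le> e1" using lpq[of 0] by (simp add: lk_xy)
      moreover have "e1 \<le> lk q 0" using lh[of 0] True by (simp add: lk_xy)
      ultimately show ?thesis by simp
    next
      case False
      then obtain c where c: "c \<in> S" "h = xy (d - c) c" using h(1) Gdef by auto
      have "c \<le> \<delta> + lk q 1" using lh[of 1] c(2) by (simp add: lk_xy)
      moreover have "lk q 1 \<le> e2" using lpq[of 1] by (simp add: lk_xy)
      ultimately have "c < b" using e2 dl by linarith
      then have "c \<le> t" using gap c(1) by force
      moreover have "d - c \<le> lk q 0" using lh[of 0] c(2) by (simp add: lk_xy)
      moreover have "lk q 0 \<le> e1" using lpq[of 0] by (simp add: lk_xy)
      ultimately show ?thesis using dtb e1 by linarith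
    qed
  qed
  have "p = 0"
  proof (rule poly_mapping_eqI)
    fix k
    show "lk p k = lk 0 k"
    proof (cases "k = 0 \<or> k = 1")
      case True then show ?thesis using p0 p1 by auto
    next
      case False
      then have "lk p k + lk q k \<le> 0" using lpq[of k] by (simp add: lk_xy)
      then show ?thesis by simp
    qed
  qed
  then show False using pq(1) zA by simp
qed

lemma AtomE:
  assumes N: "2 \<le> N" and Sd: "\<forall>c\<in>S. c \<le> d" and S0: "0 \<in> S" and Sd': "d \<in> S"
    and dtb: "d = t + b" and gap: "\<forall>c\<in>S. c \<le> t \<or> b \<le> c"
    and e1: "e1 + t < b" and e2: "e2 + t < b" and dE: "d < e1 + e2"
  shows "Mon_atom N (gen_ideal N (mono ` ((\<lambda>c. xy (d - c) c) ` S \<union> {xy e1 e2})) :: 'k::field mpoly set)"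
proof -
  define G where "G = (\<lambda>c. xy (d - c) c) ` S \<union> {xy e1 e2}"
  have ok: "okv N G" unfolding G_def okv_def using ks_xy_N[OF N] by blast
  have inMon: "(gen_ideal N (mono ` G) :: 'k mpoly set) \<in> Mon N" by (rule gen_in_Mon[OF ok]) (simp add: G_def)
  have z: "0 \<notin> G"
  proof
    assume "0 \<in> G"
    then have "0 = xy e1 e2 \<or> (\<exists>c\<in>S. 0 = xy (d - c) c)" unfolding G_def by auto
    then show False using dE Sd e1 dtb by (auto simp: xy_eq_0 xy_eq_0')
  qed
  have neR: "(gen_ideal N (mono ` G) :: 'k mpoly set) \<noteq> polyring N" using gen_eq_R_iff[OF ok, where 'k='k] z by blast
  have degG: "\<forall>g\<in>G. d \<le> tdeg g" unfolding G_def using Sd dE by (auto simp: tdeg_xy)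
  have X: "xy d 0 \<in> G" unfolding G_def using S0 by force
  have Y: "xy 0 d \<in> G" unfolding G_def using Sd' by force
  have "\<not> (\<exists>P Q. P \<in> Mon N - {polyring N} \<and> Q \<in> Mon N - {polyring N} \<and> (gen_ideal N (mono ` G) :: 'k mpoly set) = ideal_mult N P Q)"
  proof
    assume "\<exists>P Q. P \<in> Mon N - {polyring N} \<and> Q \<in> Mon N - {polyring N} \<and> (gen_ideal N (mono ` G) :: 'k mpoly set) = ideal_mult N P Q"
    then obtain P Q where PQ: "P \<in> Mon N" "P \<noteq> polyring N" "Q \<in> Mon N" "Q \<noteq> polyring N"
       "(gen_ideal N (mono ` G) :: 'k mpoly set) = ideal_mult N P Q" by blast
    obtain MP MQ dP dQ where D: "okv N MP" "okv N MQ" "0 \<notin> MP" "0 \<notin> MQ" "up N G = up N (msum MP MQ)"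
       "1 \<le> dP" "1 \<le> dQ" "dP + dQ = d" "xy dP 0 \<in> up N MP" "xy 0 dP \<in> up N MP"
       "xy dQ 0 \<in> up N MQ" "xy 0 dQ \<in> up N MQ"
      using prod_data[OF ok degG X Y PQ(1,2,3,4,5)] by blast
    have "xy dQ 0 + xy 0 dP \<in> up N (msum MQ MP)" by (rule up_msum[OF D(11) D(10)])
    then have "xy dQ dP \<in> up N G" using D(5) msum_comm[of MP MQ] by (simp add: xy_add)
    then obtain g where g: "g \<in> G" "lem g (xy dQ dP)" unfolding up_def by blast
    have "dP \<in> S"
    proof (cases "g = xy e1 e2")
      case True
      then show ?thesis using g(2) D(8) dE by (auto simp: lem_xy_iff)
    next
      case False
      then obtain c where c: "c \<in> S" "g = xy (d - c) c" using g(1) unfolding G_def by auto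
      then have "d - c \<le> dQ" "c \<le> dP" using g(2) by (auto simp: lem_xy_iff)
      then have "c = dP" using D(8) Sd c(1) by force
      then show ?thesis using c(1) by simp
    qed
    then have "dP \<le> t \<or> dQ \<le> t" using gap D(8) dtb by force
    then show False
    proof
      assume "dP \<le> t"
      show False by (rule Esub[OF D(1) D(2) D(3) G_def D(5) dtb gap e1 e2 \<open>dP \<le> t\<close> D(9) D(10) N])
    next
      assume "dQ \<le> t"
      have U': "up N G = up N (msum MQ MP)" using D(5) msum_comm[of MP MQ] by simp
      show False by (rule Esub[OF D(2) D(1) D(4) G_def U' dtb gap e1 e2 \<open>dQ \<le> t\<close> D(11) D(12) N])
    qed
  qed
  then show ?thesis unfolding Mon_atom_def G_def[symmetric] using inMon neR by blast
qed


definition GK :: "(nat \<Rightarrow> nat) \<Rightarrow> nat set \<Rightarrow> vec set" where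
  "GK a K = (\<lambda>L. xy (sum a (K - L)) (sum a L)) ` Pow K"

lemma GK_alt:
  assumes "finite K" shows "GK a K = (\<lambda>c. xy (sum a K - c) c) ` ((\<lambda>L. sum a L) ` Pow K)"
  unfolding GK_def image_image
proof (rule image_cong[OF refl])
  fix L assume "L \<in> Pow K"
  then have "finite L" "L \<subseteq> K" using assms finite_subset by auto
  then show "xy (sum a (K - L)) (sum a L) = xy (sum a K - sum a L) (sum a L)"
    by (simp add: sum_diff_nat)
qed

lemma okv_GK: "2 \<le> N \<Longrightarrow> okv N (GK a K)"
  unfolding GK_def by (rule okv_img_xy)

lemma GK_empty: "GK a {} = {0}"
  unfolding GK_def by (simp add: xy_0)

lemma GK_single: "GK a {i} = {xy (a i) 0, xy 0 (a i)}"
  unfolding GK_def by (auto simp: Pow_insert)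

lemma msum_GK:
  assumes f1: "finite K1" and f2: "finite K2" and dj: "K1 \<inter> K2 = {}"
  shows "msum (GK a K1) (GK a K2) = GK a (K1 \<union> K2)"
proof
  show "msum (GK a K1) (GK a K2) \<subseteq> GK a (K1 \<union> K2)"
  proof
    fix g assume "g \<in> msum (GK a K1) (GK a K2)"
    then obtain L1 L2 where L: "L1 \<subseteq> K1" "L2 \<subseteq> K2"
      "g = xy (sum a (K1 - L1)) (sum a L1) + xy (sum a (K2 - L2)) (sum a L2)"
      unfolding msum_def GK_def by blast
    have fL1: "finite L1" "finite (K1 - L1)" using L(1) f1 finite_subset by auto
    have fL2: "finite L2" "finite (K2 - L2)" using L(2) f2 finite_subset by auto
    have d1: "L1 \<inter> L2 = {}" using L dj by blast
    have d2: "(K1 - L1) \<inter> (K2 - L2) = {}" using dj by blast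
    have e1: "sum a (L1 \<union> L2) = sum a L1 + sum a L2" using sum.union_disjoint[OF fL1(1) fL2(1) d1] .
    have e2: "sum a ((K1 - L1) \<union> (K2 - L2)) = sum a (K1 - L1) + sum a (K2 - L2)"
      using sum.union_disjoint[OF fL1(2) fL2(2) d2] .
    have e3: "(K1 \<union> K2) - (L1 \<union> L2) = (K1 - L1) \<union> (K2 - L2)" using L dj by blast
    have "g = xy (sum a ((K1 \<union> K2) - (L1 \<union> L2))) (sum a (L1 \<union> L2))"
      using L(3) e1 e2 e3 by (simp add: xy_add)
    moreover have "L1 \<union> L2 \<in> Pow (K1 \<union> K2)" using L by blast
    ultimately show "g \<in> GK a (K1 \<union> K2)" unfolding GK_def by blast
  qed
next
  show "GK a (K1 \<union> K2) \<subseteq> msum (GK a K1) (GK a K2)"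
  proof
    fix g assume "g \<in> GK a (K1 \<union> K2)"
    then obtain L where L: "L \<subseteq> K1 \<union> K2" "g = xy (sum a ((K1 \<union> K2) - L)) (sum a L)"
      unfolding GK_def by blast
    define L1 where "L1 = L \<inter> K1"
    define L2 where "L2 = L \<inter> K2"
    have fL1: "finite L1" "finite (K1 - L1)" using f1 L1_def by auto
    have fL2: "finite L2" "finite (K2 - L2)" using f2 L2_def by auto
    have d1: "L1 \<inter> L2 = {}" using dj L1_def L2_def by blast
    have d2: "(K1 - L1) \<inter> (K2 - L2) = {}" using dj by blast
    have LL: "L = L1 \<union> L2" using L(1) L1_def L2_def by blast
    have e3: "(K1 \<union> K2) - L = (K1 - L1) \<union> (K2 - L2)" using L(1) dj L1_def L2_def by blast
    have "g = xy (sum a (K1 - L1)) (sum a L1) + xy (sum a (K2 - L2)) (sum a L2)"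
      using L(2) e3 LL sum.union_disjoint[OF fL1(1) fL2(1) d1, of a] sum.union_disjoint[OF fL1(2) fL2(2) d2, of a]
      by (simp add: xy_add)
    moreover have "xy (sum a (K1 - L1)) (sum a L1) \<in> GK a K1" unfolding GK_def L1_def by blast
    moreover have "xy (sum a (K2 - L2)) (sum a L2) \<in> GK a K2" unfolding GK_def L2_def by blast
    ultimately show "g \<in> msum (GK a K1) (GK a K2)" unfolding msum_def by blast
  qed
qed

definition FF :: "nat \<Rightarrow> (nat \<Rightarrow> nat) \<Rightarrow> nat \<Rightarrow> ('k::field) mpoly set" where
  "FF N a i = gen_ideal N (mono ` GK a {i})"

lemma foldr_F:
  assumes N: "2 \<le> N"
  shows "foldr (ideal_mult N) (map (FF N a) [l..<n+1]) (polyring N) = (gen_ideal N (mono ` GK a {l..n}) :: 'k::field mpoly set)"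
proof (induction "n + 1 - l" arbitrary: l)
  case 0
  then have "[l..<n+1] = []" "{l..n} = {}" by auto
  then show ?case using polyring_gen[where 'k='k and N=N] GK_empty[of a] by simp
next
  case (Suc k)
  then have ln: "l < n + 1" by simp
  then have up: "[l..<n+1] = l # [Suc l..<n+1]" by (simp add: upt_conv_Cons)
  have IH: "foldr (ideal_mult N) (map (FF N a) [Suc l..<n+1]) (polyring N) = (gen_ideal N (mono ` GK a {Suc l..n}) :: 'k mpoly set)"
    using Suc by simp
  have "foldr (ideal_mult N) (map (FF N a) [l..<n+1]) (polyring N)
        = ideal_mult N (FF N a l) (gen_ideal N (mono ` GK a {Suc l..n}) :: 'k mpoly set)"
    using up IH by simp
  also have "\<dots> = gen_ideal N (mono ` msum (GK a {l}) (GK a {Suc l..n}))"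
    unfolding FF_def by (rule ideal_mult_gen[OF okv_GK[OF N] okv_GK[OF N]])
  also have "msum (GK a {l}) (GK a {Suc l..n}) = GK a ({l} \<union> {Suc l..n})"
    by (rule msum_GK) auto
  also have "{l} \<union> {Suc l..n} = {l..n}" using ln by auto
  finally show ?case .
qed

lemma msum_Un: "msum (A \<union> B) C = msum A C \<union> msum B C"
  unfolding msum_def by blast

lemma msum_single: "msum {E} C = (\<lambda>g. E + g) ` C"
  unfolding msum_def by blast

lemma up_absorb: "(\<forall>b\<in>B. b \<in> up N A) \<Longrightarrow> up N (A \<union> B) = up N A"
proof
  assume h: "\<forall>b\<in>B. b \<in> up N A"
  show "up N (A \<union> B) \<subseteq> up N A"
  proof
    fix m assume "m \<in> up N (A \<union> B)"
    then obtain g where g: "g \<in> A \<union> B" "lem g m" and km: "ks m \<subseteq> {..<N}" unfolding up_def by blast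
    show "m \<in> up N A"
    proof (cases "g \<in> A")
      case True then show ?thesis using g km unfolding up_def by blast
    next
      case False
      then have "g \<in> up N A" using g h by blast
      then obtain g' where "g' \<in> A" "lem g' g" unfolding up_def by blast
      then show ?thesis using g km lem_trans unfolding up_def by blast
    qed
  qed
qed (auto simp: up_def)


definition eE :: "(nat \<Rightarrow> nat) \<Rightarrow> nat \<Rightarrow> nat \<Rightarrow> nat" where
  "eE a n j = a (n+1) - sum a {1..j} - 1"
definition GE :: "(nat \<Rightarrow> nat) \<Rightarrow> nat \<Rightarrow> nat \<Rightarrow> vec set" where
  "GE a n j = GK a (insert (n+1) {1..j}) \<union> {xy (eE a n j) (eE a n j)}"
definition AE :: "nat \<Rightarrow> (nat \<Rightarrow> nat) \<Rightarrow> nat \<Rightarrow> nat \<Rightarrow> ('k::field) mpoly set" where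
  "AE N a n j = gen_ideal N (mono ` GE a n j)"
definition fac :: "nat \<Rightarrow> (nat \<Rightarrow> nat) \<Rightarrow> nat \<Rightarrow> nat \<Rightarrow> ('k::field) mpoly set list" where
  "fac N a n j = AE N a n j # map (FF N a) [j+1..<n+1]"

lemma sum_split_ivl: "j \<le> m \<Longrightarrow> sum a {1..j} + sum a {j+1..m} = sum a {1..(m::nat)}"
proof -
  assume jm: "j \<le> m"
  have "{1..m} = {1..j} \<union> {j+1..m}" using jm by auto
  moreover have "{1..j} \<inter> {j+1..m} = {}" by auto
  ultimately show ?thesis by (simp add: sum.union_disjoint[symmetric])
qed

locale cfg =
  fixes a :: "nat \<Rightarrow> nat" and n N :: nat
  assumes N2: "2 \<le> N" and n2: "2 \<le> n"
    and pos: "\<forall>i\<in>{1..n+1}. 0 < a i"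
    and c1: "a (n+1) = sum a {1..n-1} + 2 * a n"
    and c2: "\<forall>i\<in>{1..n-1}. 2 * sum a {1..i} < a (i+1)"
begin

definition s where "s = sum a {1..n-1}"
definition u where "u = a n"

lemma us: "2 * s < u"
proof -
  have "n - 1 \<in> {1..n-1}" using n2 by simp
  then have "2 * sum a {1..n-1} < a (n-1+1)" using c2 by blast
  then show ?thesis using n2 unfolding s_def u_def by simp
qed

lemma s1: "1 \<le> s"
proof -
  have "a 1 \<le> sum a {1..n-1}" by (rule member_le_sum) (use n2 in auto)
  moreover have "0 < a 1" using pos by simp
  ultimately show ?thesis unfolding s_def by simp
qed

lemma beta: "a (n+1) = s + 2 * u" using c1 unfolding s_def u_def by simp

lemma sum_n: "sum a {1..n} = s + u"
  using sum_split_ivl[of "n-1" n a] n2 unfolding s_def u_def by simp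

lemma sum_n1: "sum a {1..n+1} = s + u + a (n+1)"
  using sum_split_ivl[of n "n+1" a] sum_n by simp

lemma tau_le: "j \<le> n - 1 \<Longrightarrow> sum a {1..j} \<le> s"
  unfolding s_def by (rule sum_mono2) auto

lemma sum_singleton_nat: "sum a {k} = a k" by simp

lemma absorb:
  assumes j: "j \<le> n - 1" and g: "g \<in> GK a {j+1..n}"
  shows "xy (eE a n j) (eE a n j) + g \<in> up N (GK a {1..n+1})"
proof -
  define t where "t = sum a {1..j}"
  define D where "D = sum a {j+1..n}"
  define e where "e = eE a n j"
  have tD: "t + D = s + u" using sum_split_ivl[of j n a] j n2 sum_n unfolding t_def D_def by simp
  have ts: "t \<le> s" using tau_le[OF j] t_def by simp
  have eq: "e = a (n+1) - t - 1" unfolding e_def eE_def t_def by simp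
  note us beta
  obtain L where L: "L \<subseteq> {j+1..n}" "g = xy (sum a ({j+1..n} - L)) (sum a L)" using g unfolding GK_def by blast
  have fL: "finite L" using L(1) finite_subset by blast
  define l where "l = sum a L"
  have lD: "l \<le> D" unfolding l_def D_def using L(1) by (rule sum_mono2[rotated]) auto
  have gD: "sum a ({j+1..n} - L) = D - l" unfolding D_def l_def using L(1) fL by (simp add: sum_diff_nat)
  have Eg: "xy e e + g = xy (e + (D - l)) (e + l)" using L(2) gD l_def by (simp add: xy_add)
  have kN: "ks (xy (e + (D - l)) (e + l)) \<subseteq> {..<N}" by (rule ks_xy_N[OF N2])
  show ?thesis
  proof (cases "n \<in> L")
    case False
    define L' where "L' = insert n L"
    have L'sub: "L' \<subseteq> {1..n+1}" using L(1) n2 L'_def by auto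
    have sL': "sum a L' = u + l" unfolding L'_def l_def u_def using False fL by simp
    have fL': "finite L'" using fL L'_def by simp
    have sC: "sum a ({1..n+1} - L') = sum a {1..n+1} - (u + l)" using sL' L'sub fL' by (simp add: sum_diff_nat)
    have mem: "xy (sum a ({1..n+1} - L')) (sum a L') \<in> GK a {1..n+1}" unfolding GK_def using L'sub by blast
    have "lem (xy (sum a ({1..n+1} - L')) (sum a L')) (xy (e + (D - l)) (e + l))"
      unfolding lem_xy_iff sC sL' sum_n1 using eq tD ts lD us beta by linarith
    then show ?thesis unfolding e_def[symmetric] Eg up_def using mem kN by blast
  next
    case True
    have lu: "u \<le> l" unfolding u_def l_def by (rule member_le_sum) (use True fL in auto)
    have sub: "{n+1} \<subseteq> {1..n+1}" by simp
    have sC: "sum a ({1..n+1} - {n+1}) = s + u"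
    proof -
      have "{1..n+1} - {n+1} = {1..n}" by auto
      then show ?thesis using sum_n by simp
    qed
    have mem: "xy (sum a ({1..n+1} - {n+1})) (sum a {n+1}) \<in> GK a {1..n+1}" unfolding GK_def using sub by blast
    have "lem (xy (sum a ({1..n+1} - {n+1})) (sum a {n+1})) (xy (e + (D - l)) (e + l))"
      unfolding lem_xy_iff sC sum_singleton_nat using eq tD ts lD lu us beta by linarith
    then show ?thesis unfolding e_def[symmetric] Eg up_def using mem kN by blast
  qed
qed

lemma AE_atom:
  assumes j: "j \<le> n - 1"
  shows "Mon_atom N (AE N a n j :: 'k::field mpoly set)"
proof -
  define K where "K = insert (n+1) {1..j}"
  define t where "t = sum a {1..j}"
  define b where "b = a (n+1)"
  define d where "d = sum a K"
  define S where "S = (\<lambda>L. sum a L) ` Pow K"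
  define e where "e = eE a n j"
  have fK: "finite K" unfolding K_def by simp
  have ts: "t \<le> s" using tau_le[OF j] t_def by simp
  note us beta s1
  have nK: "n + 1 \<notin> {1..j}" using j by simp
  have dtb: "d = t + b" unfolding d_def K_def t_def b_def using nK by simp
  have eq: "e = b - t - 1" unfolding e_def eE_def t_def b_def by simp
  have GE: "GE a n j = (\<lambda>c. xy (d - c) c) ` S \<union> {xy e e}"
    unfolding GE_def GK_alt[OF fK] K_def[symmetric] d_def S_def e_def ..
  have Sd: "\<forall>c\<in>S. c \<le> d" unfolding S_def d_def using fK by (auto intro: sum_mono2)
  have S0: "0 \<in> S" unfolding S_def by force
  have Sd': "d \<in> S" unfolding S_def d_def by blast
  have gap: "\<forall>c\<in>S. c \<le> t \<or> b \<le> c"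
  proof
    fix c assume "c \<in> S"
    then obtain L where L: "L \<subseteq> K" "c = sum a L" unfolding S_def by blast
    show "c \<le> t \<or> b \<le> c"
    proof (cases "n + 1 \<in> L")
      case True
      have "finite L" using L(1) fK finite_subset by blast
      then have "a (n+1) \<le> sum a L" using True by (intro member_le_sum) auto
      then show ?thesis using L(2) b_def by simp
    next
      case False
      then have "L \<subseteq> {1..j}" using L(1) K_def by auto
      then have "sum a L \<le> sum a {1..j}" by (intro sum_mono2) auto
      then show ?thesis using L(2) t_def by simp
    qed
  qed
  have e1: "e + t < b" using eq ts us beta b_def by linarith
  have dE: "d < e + e" using eq dtb ts us beta b_def s1 by linarith
  have "Mon_atom N (gen_ideal N (mono ` ((\<lambda>c. xy (d - c) c) ` S \<union> {xy e e})) :: 'k mpoly set)"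
    by (rule AtomE[OF N2 Sd S0 Sd' dtb gap e1 e1 dE])
  then show ?thesis unfolding AE_def GE .
qed

lemma FF_atom:
  assumes i: "i \<in> {1..n+1}" shows "Mon_atom N (FF N a i :: 'k::field mpoly set)"
  unfolding FF_def GK_single using Atom2[OF N2] pos i by blast

lemma ICn_GK: "ICn N a n = (gen_ideal N (mono ` GK a {1..n+1}) :: 'k::field mpoly set)"
proof -
  have "((\<lambda>c. monoXY (sum a {1..n+1} - c) c) ` Cset a n :: 'k mpoly set) = mono ` ((\<lambda>c. xy (sum a {1..n+1} - c) c) ` Cset a n)"
    unfolding monoXY_def xy_def image_image ..
  also have "(\<lambda>c. xy (sum a {1..n+1} - c) c) ` Cset a n = GK a {1..n+1}"
    unfolding Cset_def by (rule GK_alt[symmetric]) simp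
  finally show ?thesis unfolding ICn_def by simp
qed

lemma fac_prod:
  assumes j: "j \<le> n - 1"
  shows "foldr (ideal_mult N) (fac N a n j) (polyring N) = (ICn N a n :: 'k::field mpoly set)"
proof -
  define K where "K = insert (n+1) {1..j}"
  define E where "E = xy (eE a n j) (eE a n j)"
  have okGE: "okv N (GE a n j)" unfolding GE_def okv_def using okv_GK[OF N2] ks_xy_N[OF N2]
    unfolding okv_def by blast
  have "foldr (ideal_mult N) (fac N a n j) (polyring N)
      = ideal_mult N (AE N a n j) (gen_ideal N (mono ` GK a {j+1..n}) :: 'k mpoly set)"
    unfolding fac_def using foldr_F[OF N2, of a "j+1" n, where 'k='k] by simp
  also have "\<dots> = gen_ideal N (mono ` msum (GE a n j) (GK a {j+1..n}))"
    unfolding AE_def by (rule ideal_mult_gen[OF okGE okv_GK[OF N2]])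
  also have "msum (GE a n j) (GK a {j+1..n}) = GK a {1..n+1} \<union> (\<lambda>g. E + g) ` GK a {j+1..n}"
  proof -
    have "msum (GK a K) (GK a {j+1..n}) = GK a (K \<union> {j+1..n})"
      by (rule msum_GK) (use j in \<open>auto simp: K_def\<close>)
    also have "K \<union> {j+1..n} = {1..n+1}" using j n2 unfolding K_def by auto
    finally show ?thesis unfolding GE_def K_def[symmetric] E_def[symmetric] msum_Un msum_single by simp
  qed
  finally have eq1: "foldr (ideal_mult N) (fac N a n j) (polyring N :: 'k mpoly set) = gen_ideal N (mono ` (GK a {1..n+1} \<union> (\<lambda>g. E + g) ` GK a {j+1..n}))" .
  have ok2: "okv N (GK a {1..n+1} \<union> (\<lambda>g. E + g) ` GK a {j+1..n})"
  proof -
    have "okv N (msum (GE a n j) (GK a {j+1..n}))" by (rule okv_msum[OF okGE okv_GK[OF N2]])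
    moreover have "msum (GE a n j) (GK a {j+1..n}) = GK a {1..n+1} \<union> (\<lambda>g. E + g) ` GK a {j+1..n}"
    proof -
      have "msum (GK a K) (GK a {j+1..n}) = GK a (K \<union> {j+1..n})"
        by (rule msum_GK) (use j in \<open>auto simp: K_def\<close>)
      also have "K \<union> {j+1..n} = {1..n+1}" using j n2 unfolding K_def by auto
      finally show ?thesis unfolding GE_def K_def[symmetric] E_def[symmetric] msum_Un msum_single by simp
    qed
    ultimately show ?thesis by simp
  qed
  have "up N (GK a {1..n+1} \<union> (\<lambda>g. E + g) ` GK a {j+1..n}) = up N (GK a {1..n+1})"
    by (rule up_absorb) (use absorb[OF j] E_def in blast)
  then have "(gen_ideal N (mono ` (GK a {1..n+1} \<union> (\<lambda>g. E + g) ` GK a {j+1..n})) :: 'k mpoly set)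
       = gen_ideal N (mono ` GK a {1..n+1})"
    using gen_eq_iff[OF ok2 okv_GK[OF N2], where 'k='k] by blast
  then show ?thesis using eq1 ICn_GK[where 'k='k] by simp
qed

lemma fac_atoms:
  assumes j: "j \<le> n - 1"
  shows "\<forall>A\<in>set (fac N a n j). Mon_atom N (A :: 'k::field mpoly set)"
  unfolding fac_def using AE_atom[OF j] by (auto intro!: FF_atom)

lemma fac_len: assumes j: "j \<le> n - 1" shows "length (fac N a n j) = n + 1 - j"
  unfolding fac_def using j n2 by (simp, linarith)

end


lemma Hs_MC:
  assumes N2: "2 \<le> N" and Cle: "\<forall>c\<in>C. c \<le> \<mu>"
  shows "Hs \<mu> C (up N ((\<lambda>c. xy (\<mu> - c) c) ` C))"
  unfolding Hs_def
proof (intro conjI allI ballI)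
  fix w assume "w \<in> up N ((\<lambda>c. xy (\<mu> - c) c) ` C)"
  then obtain c where c: "c \<in> C" "lem (xy (\<mu> - c) c) w" unfolding up_def by blast
  have "tdeg (xy (\<mu> - c) c) = \<mu>" using Cle c(1) by (simp add: tdeg_xy)
  then show "\<mu> \<le> tdeg w" using lem_tdeg[OF c(2)] by simp
next
  fix c
  show "c \<in> C \<longleftrightarrow> c \<le> \<mu> \<and> xy (\<mu> - c) c \<in> up N ((\<lambda>c. xy (\<mu> - c) c) ` C)"
  proof
    assume c: "c \<in> C"
    have "ks (xy (\<mu> - c) c) \<subseteq> {..<N}" by (rule ks_xy_N[OF N2])
    then show "c \<le> \<mu> \<and> xy (\<mu> - c) c \<in> up N ((\<lambda>c. xy (\<mu> - c) c) ` C)"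
      using c Cle lem_refl unfolding up_def by blast
  next
    assume h: "c \<le> \<mu> \<and> xy (\<mu> - c) c \<in> up N ((\<lambda>c. xy (\<mu> - c) c) ` C)"
    then obtain c' where c': "c' \<in> C" "lem (xy (\<mu> - c') c') (xy (\<mu> - c) c)" unfolding up_def by blast
    then have "\<mu> - c' \<le> \<mu> - c" "c' \<le> c" by (auto simp: lem_xy_iff)
    moreover have "c' \<le> \<mu>" using Cle c'(1) by blast
    ultimately have "c' = c" using h by linarith
    then show "c \<in> C" using c'(1) by simp
  qed
qed

lemma ideal_mult_R:
  assumes "okv N M"
  shows "ideal_mult N (gen_ideal N (mono ` M)) (polyring N) = (gen_ideal N (mono ` M) :: 'k::field mpoly set)"
  using ideal_mult_gen[OF assms okv_0, where 'k='k] polyring_gen[where 'k='k and N=N] msum_0[of M] by simp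

lemma atom_MonD: "Mon_atom N A \<Longrightarrow> A \<in> Mon N - {polyring N}"
  unfolding Mon_atom_def by simp

lemma atom_no_split: "Mon_atom N I \<Longrightarrow> A \<in> Mon N - {polyring N} \<Longrightarrow> B \<in> Mon N - {polyring N} \<Longrightarrow> I = ideal_mult N A B \<Longrightarrow> False"
  unfolding Mon_atom_def by blast

theorem corollary4p8:
  fixes N n :: nat and a :: "nat \<Rightarrow> nat"
  assumes "N \<ge> 2" and "n \<ge> 2"
    and "\<forall>i\<in>{1..n+1}. a i > 0"
    and "a (n+1) = sum a {1..n-1} + 2 * a n"
    and "\<forall>i\<in>{1..n-1}. a (i+1) > 2 * sum a {1..i}"
  shows "Mon_lengths N (ICn N a n :: ('k::field) mpoly set) = {2..n+1}"
proof -
  interpret cfg a n N using assms by unfold_locales auto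
  define \<mu> where "\<mu> = sum a {1..n+1}"
  define M where "M = (\<lambda>c. xy (\<mu> - c) c) ` Cset a n"
  have okM: "okv N M" unfolding M_def by (rule okv_img_xy[OF N2])
  have ICnM: "ICn N a n = (gen_ideal N (mono ` M) :: 'k mpoly set)"
  proof -
    have "((\<lambda>c. monoXY (sum a {1..n+1} - c) c) ` Cset a n :: 'k mpoly set) = mono ` M"
      unfolding monoXY_def xy_def image_image M_def \<mu>_def ..
    then show ?thesis unfolding ICn_def by simp
  qed
  have Cle: "\<forall>c\<in>Cset a n. c \<le> \<mu>"
  proof
    fix c assume "c \<in> Cset a n"
    then obtain L where L: "L \<subseteq> {1..n+1}" "c = sum a L" unfolding Cset_def by blast
    have "sum a L \<le> sum a {1..n+1}" by (rule sum_mono2) (use L(1) in auto)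
    then show "c \<le> \<mu>" using L(2) unfolding \<mu>_def by simp
  qed
  have C0: "0 \<in> Cset a n" unfolding Cset_def by force
  have Cmu: "\<mu> \<in> Cset a n" unfolding Cset_def \<mu>_def by blast
  have HsM: "Hs \<mu> (Cset a n) (up N M)" unfolding M_def by (rule Hs_MC[OF N2 Cle])
  have CP: "Cset a n = Pset a (n+1)" unfolding Cset_def Pset_def ..
  have mu_pos: "0 < \<mu>"
  proof -
    have "a 1 \<le> \<mu>" unfolding \<mu>_def by (rule member_le_sum) auto
    moreover have "0 < a 1" using pos by simp
    ultimately show ?thesis by simp
  qed
  have fac2: "fac N a n (n - 1) = [AE N a n (n-1), FF N a n]"
    unfolding fac_def using n2 by (simp add: upt_conv_Cons)
  have not_atom: "\<not> Mon_atom N (ICn N a n :: 'k mpoly set)"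
  proof
    assume at: "Mon_atom N (ICn N a n :: 'k mpoly set)"
    have j: "n - 1 \<le> n - 1" by simp
    have A1: "Mon_atom N (AE N a n (n-1) :: 'k mpoly set)" by (rule AE_atom[OF j])
    have A2: "Mon_atom N (FF N a n :: 'k mpoly set)" by (rule FF_atom) (use n2 in simp)
    obtain MF where MF: "okv N MF" "MF \<noteq> {}" "0 \<notin> MF" "(FF N a n :: 'k mpoly set) = gen_ideal N (mono ` MF)"
      using atom_unpack[OF A2] by blast
    have "ICn N a n = foldr (ideal_mult N) (fac N a n (n-1)) (polyring N :: 'k mpoly set)"
      using fac_prod[OF j, where 'k='k] by simp
    also have "\<dots> = ideal_mult N (AE N a n (n-1)) (ideal_mult N (FF N a n) (polyring N))"
      unfolding fac2 by simp
    also have "ideal_mult N (FF N a n) (polyring N) = (FF N a n :: 'k mpoly set)"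
      using MF(4) ideal_mult_R[OF MF(1), where 'k='k] by simp
    finally have eq: "ICn N a n = ideal_mult N (AE N a n (n-1)) (FF N a n :: 'k mpoly set)" .
    show False by (rule atom_no_split[OF at atom_MonD[OF A1] atom_MonD[OF A2] eq])
  qed
  show ?thesis
  proof (intro equalityI subsetI)
    fix k assume "k \<in> Mon_lengths N (ICn N a n :: 'k mpoly set)"
    then obtain As where As: "length As = k" "\<forall>A\<in>set As. Mon_atom N (A :: 'k mpoly set)"
        "ICn N a n = foldr (ideal_mult N) As (polyring N)"
      unfolding Mon_lengths_def by blast
    have fM: "foldr (ideal_mult N) As (polyring N) = gen_ideal N (mono ` M)" using As(3) ICnM by simp
    obtain xs where xs: "length xs = length As" "\<forall>x\<in>set xs. 0 < x" "subsums xs \<subseteq> Cset a n"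
      using UB_ind[OF As(2) okM fM HsM C0 Cmu] by blast
    have c2': "\<forall>i\<in>{1..n-1}. 2 * sum a {1..i} < a (i+1)" using c2 by blast
    have "length xs \<le> n + 1" using C1[OF n2 pos c1 c2' xs(2)] xs(3) CP by simp
    then have kle: "k \<le> n + 1" using xs(1) As(1) by simp
    have k0: "k \<noteq> 0"
    proof
      assume "k = 0"
      then have "As = []" using As(1) by simp
      then have "gen_ideal N (mono ` M) = (polyring N :: 'k mpoly set)" using fM by simp
      then have "0 \<in> M" using gen_eq_R_iff[OF okM, where 'k='k] by blast
      then obtain c where c: "c \<in> Cset a n" "xy (\<mu> - c) c = 0" unfolding M_def by auto
      then have "\<mu> - c = 0" "c = 0" using xy_eq_0 by auto
      then show False using mu_pos by simp
    qed
    have k1: "k \<noteq> 1"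
    proof
      assume "k = 1"
      then obtain A where A: "As = [A]" using As(1) by (cases As) auto
      then have at: "Mon_atom N A" using As(2) by simp
      obtain MA where MA: "okv N MA" "MA \<noteq> {}" "0 \<notin> MA" "A = gen_ideal N (mono ` MA)"
        using atom_unpack[OF at] by blast
      have "ICn N a n = ideal_mult N A (polyring N)" using As(3) A by simp
      also have "\<dots> = A" using MA(4) ideal_mult_R[OF MA(1), where 'k='k] by simp
      finally show False using at not_atom by simp
    qed
    show "k \<in> {2..n+1}" using kle k0 k1 by auto
  next
    fix k assume k: "k \<in> {2..n+1}"
    define j where "j = n + 1 - k"
    have j: "j \<le> n - 1" using k j_def by auto
    have "length (fac N a n j :: 'k mpoly set list) = k" using fac_len[OF j] j_def k by auto
    moreover have "\<forall>A\<in>set (fac N a n j). Mon_atom N (A :: 'k mpoly set)" by (rule fac_atoms[OF j])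
    moreover have "ICn N a n = foldr (ideal_mult N) (fac N a n j) (polyring N :: 'k mpoly set)"
      using fac_prod[OF j, where 'k='k] by simp
    ultimately show "k \<in> Mon_lengths N (ICn N a n :: 'k mpoly set)"
      unfolding Mon_lengths_def by blast
  qed
qed


end
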